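(* Let $\mathcal{F}$ be a family of objects such that any subset of $n$ objects from $\mathcal{F}$ admits a unimax coloring with $\gamma_{\mathrm{um}}(n)$ colors that allows weak deletions at the cost of $r(n)$ recolorings, where $\gamma_{\mathrm{um}}$ and $r$ are non-decreasing. Then one can maintain a conflict-free coloring of a set $S$ of objects from $\mathcal{F}$ under insertions and deletions such that the number of used colors is $O\big(\sum_{i=0}^{k}\gamma_{\mathrm{um}}(2^i)\log n\big)$ for some $k=\Theta(\log n)$, the number of recolorings per insertion is $O(\log n)$, and the number of recolorings per deletion is $O(r(8n)+1)$, where $n$ is the current number of objects in $S$.
   Context: Objects are either regions in the plane (colored with respect to points) or points (colored with respect to a family of ranges). For $q$ a point (resp. range), $S_q$ is the set of objects of $S$ related to $q$. A coloring is conflict-free if for every $q$ with $S_q\ne\emptyset$ some object in $S_q$ has a color unique in $S_q$; it is unimax if (colors being integers) the maximum color in $S_q$ is attained by a unique object whenever $S_q\ne\emptyset$. A unimax coloring allows weak deletions at cost $r(n)$ if, once a set of $n_0$ objects has been unimax-colored with $\gamma_{\mathrm{um}}(n_0)$ colors, objects can be deleted one by one, each deletion recoloring at most $r(n_0)$ of the remaining objects, so that the coloring stays unimax and the number of colors never exceeds $\gamma_{\mathrm{um}}(n_0)$. The number of recolorings of an update is the number of objects whose color changes. *)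

theory Defs
  imports Complex_Main "HOL-Library.Landau_Symbols"
begin

text \<open>Abstract setting: objects of type 'o, "queries" (points or ranges) of type 'q,
  and a relation rel q s meaning that object s is related to q.
  For a set S of objects, S_q = {s \<in> S. rel q s}.\<close>

definition rel_set :: "('q \<Rightarrow> 'o \<Rightarrow> bool) \<Rightarrow> 'o set \<Rightarrow> 'q \<Rightarrow> 'o set" where
  "rel_set rel S q = {s \<in> S. rel q s}"

definition conflict_free :: "('q \<Rightarrow> 'o \<Rightarrow> bool) \<Rightarrow> 'o set \<Rightarrow> ('o \<Rightarrow> 'c) \<Rightarrow> bool" where
  "conflict_free rel S c \<longleftrightarrow>
     (\<forall>q. rel_set rel S q \<noteq> {} \<longrightarrow>
        (\<exists>s\<in>rel_set rel S q. \<forall>t\<in>rel_set rel S q. t \<noteq> s \<longrightarrow> c t \<noteq> c s))"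

definition unimax :: "('q \<Rightarrow> 'o \<Rightarrow> bool) \<Rightarrow> 'o set \<Rightarrow> ('o \<Rightarrow> int) \<Rightarrow> bool" where
  "unimax rel S c \<longleftrightarrow>
     (\<forall>q. rel_set rel S q \<noteq> {} \<longrightarrow>
        (\<exists>s\<in>rel_set rel S q. \<forall>t\<in>rel_set rel S q. t \<noteq> s \<longrightarrow> c t < c s))"

definition recolorings :: "'o set \<Rightarrow> ('o \<Rightarrow> 'c) \<Rightarrow> ('o \<Rightarrow> 'c) \<Rightarrow> nat" where
  "recolorings T c c' = card {s \<in> T. c' s \<noteq> c s}"

text \<open>The unimax coloring c0 of S0 (with at most gamma(|S0|) colors) allows weak deletions
  at cost r: there is a set of reachable states (S, c), containing (S0, c0), all of which
  are unimax with at most gamma(|S0|) colors, such that from every state any object can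
  be deleted, recoloring at most r(|S0|) of the remaining objects, reaching again a state
  of the set.  (Such an invariant set exists iff a deletion strategy exists.)\<close>
definition allows_weak_deletions ::
  "('q \<Rightarrow> 'o \<Rightarrow> bool) \<Rightarrow> (nat \<Rightarrow> nat) \<Rightarrow> (nat \<Rightarrow> nat) \<Rightarrow> 'o set \<Rightarrow> ('o \<Rightarrow> int) \<Rightarrow> bool" where
  "allows_weak_deletions rel \<gamma> r S0 c0 \<longleftrightarrow>
     (\<exists>Inv. (S0, c0) \<in> Inv \<and>
        (\<forall>(S, c) \<in> Inv.
            S \<subseteq> S0 \<and> unimax rel S c \<and> card (c ` S) \<le> \<gamma> (card S0) \<and>
            (\<forall>x\<in>S. \<exists>c'. (S - {x}, c') \<in> Inv \<and>
                        recolorings (S - {x}) c c' \<le> r (card S0))))"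

definition dynamic_cf_scheme ::
  "('q \<Rightarrow> 'o \<Rightarrow> bool) \<Rightarrow> 'o set \<Rightarrow>
   (nat \<Rightarrow> real) \<Rightarrow> (nat \<Rightarrow> real) \<Rightarrow> (nat \<Rightarrow> real) \<Rightarrow> ('o set \<times> ('o \<Rightarrow> nat)) set \<Rightarrow> bool" where
  "dynamic_cf_scheme rel F colB insB delB Inv \<longleftrightarrow>
     (\<exists>c0. ({}, c0) \<in> Inv) \<and>
     (\<forall>(S, c) \<in> Inv.
        finite S \<and> S \<subseteq> F \<and> conflict_free rel S c \<and>
        real (card (c ` S)) \<le> colB (card S) \<and>
        (\<forall>x \<in> F - S. \<exists>c'. (insert x S, c') \<in> Inv \<and>
             real (recolorings S c c') \<le> insB (card S)) \<and>
        (\<forall>x \<in> S. \<exists>c'. (S - {x}, c') \<in> Inv \<and>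
             real (recolorings (S - {x}) c c') \<le> delB (card S)))"

end

theory Submission
  imports Defs "HOL-Library.Product_Lexorder" "HOL-Library.Nat_Bijection"
begin

datatype 'o grp = Grp (gT: "'o set") (gG: "'o set") (gc: "'o \<Rightarrow> int") (gs: nat)

datatype 'o cfg = Em | Lf "'o grp" | Uc "'o cfg" "'o cfg" | Ov "'o cfg" "'o grp" "'o set"

fun cdom :: "'o cfg \<Rightarrow> 'o set" where
  "cdom Em = {}"
| "cdom (Lf g) = gG g"
| "cdom (Uc a b) = cdom a \<union> cdom b"
| "cdom (Ov a g V) = cdom a"

fun col :: "'o cfg \<Rightarrow> 'o \<Rightarrow> nat \<times> int" where
  "col Em x = (0, 0)"
| "col (Lf g) x = (gs g, gc g x)"
| "col (Uc a b) x = (if x \<in> cdom a then col a x else col b x)"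
| "col (Ov a g V) x = (if x \<in> V then (gs g, gc g x) else col a x)"

fun slots :: "'o cfg \<Rightarrow> nat set" where
  "slots Em = {}"
| "slots (Lf g) = {gs g}"
| "slots (Uc a b) = slots a \<union> slots b"
| "slots (Ov a g V) = insert (gs g) (slots a)"

fun groups :: "'o cfg \<Rightarrow> 'o grp list" where
  "groups Em = []"
| "groups (Lf g) = [g]"
| "groups (Uc a b) = groups a @ groups b"
| "groups (Ov a g V) = g # groups a"

fun hgt :: "'o cfg \<Rightarrow> nat" where
  "hgt Em = 0"
| "hgt (Lf g) = 1"
| "hgt (Uc a b) = max (hgt a) (hgt b)"
| "hgt (Ov a g V) = Suc (hgt a)"

definition mult :: "'o \<Rightarrow> 'o cfg \<Rightarrow> nat" where
  "mult x cf = length (filter (\<lambda>g. x \<in> gG g) (groups cf))"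

definition allT :: "nat \<Rightarrow> 'o cfg \<Rightarrow> bool" where
  "allT M cf \<longleftrightarrow> (\<forall>g\<in>set (groups cf). card (gT g) \<le> M)"

definition umx :: "('q \<Rightarrow> 'o \<Rightarrow> bool) \<Rightarrow> 'o set \<Rightarrow> ('o \<Rightarrow> 'a::linorder) \<Rightarrow> bool" where
  "umx rel S f \<longleftrightarrow> (\<forall>q. rel_set rel S q \<noteq> {} \<longrightarrow>
        (\<exists>s\<in>rel_set rel S q. \<forall>t\<in>rel_set rel S q. t \<noteq> s \<longrightarrow> f t < f s))"

definition wd_closed where
 "wd_closed rel \<gamma> r S0 Inv \<longleftrightarrow> (\<forall>(S, c) \<in> Inv.
            S \<subseteq> S0 \<and> unimax rel S c \<and> card (c ` S) \<le> \<gamma> (card S0) \<and>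
            (\<forall>x\<in>S. \<exists>c'. (S - {x}, c') \<in> Inv \<and>
                        recolorings (S - {x}) c c' \<le> r (card S0)))"

definition WD where
 "WD rel \<gamma> r T S c \<longleftrightarrow> finite T \<and> (\<exists>Inv c0. (T,c0) \<in> Inv \<and> wd_closed rel \<gamma> r T Inv \<and> (S,c) \<in> Inv)"

lemma WD_props:
  assumes "WD rel \<gamma> r T S c"
  shows "finite T" "S \<subseteq> T" "finite S" "unimax rel S c" "card (c ` S) \<le> \<gamma> (card T)"
proof -
  show "finite T" "S \<subseteq> T" "unimax rel S c" "card (c ` S) \<le> \<gamma> (card T)"
  proof -
    from assms obtain Inv c0 where I: "(T,c0) \<in> Inv" "wd_closed rel \<gamma> r T Inv" "(S,c) \<in> Inv" "finite T"
      unfolding WD_def by auto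
    have "S \<subseteq> T \<and> unimax rel S c \<and> card (c ` S) \<le> \<gamma> (card T)"
      using bspec[OF I(2)[unfolded wd_closed_def] I(3)] by auto
    then show "finite T" "S \<subseteq> T" "unimax rel S c" "card (c ` S) \<le> \<gamma> (card T)" using I by auto
  qed
  then show "finite S" using finite_subset by blast
qed

lemma WD_del:
  assumes "WD rel \<gamma> r T S c" "x \<in> S"
  shows "\<exists>c'. WD rel \<gamma> r T (S - {x}) c' \<and> card {y \<in> S - {x}. c' y \<noteq> c y} \<le> r (card T)"
proof -
  from assms obtain Inv c0 where I: "(T,c0) \<in> Inv" "wd_closed rel \<gamma> r T Inv" "(S,c) \<in> Inv" "finite T"
    unfolding WD_def by auto
  then obtain c' where "(S - {x}, c') \<in> Inv" "recolorings (S - {x}) c c' \<le> r (card T)"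
    using bspec[OF I(2)[unfolded wd_closed_def] I(3)] assms(2) by auto
  then show ?thesis using I unfolding WD_def recolorings_def by blast
qed

lemma WD_start:
  assumes "finite T" "allows_weak_deletions rel \<gamma> r T c0"
  shows "WD rel \<gamma> r T T c0"
  using assms unfolding WD_def allows_weak_deletions_def wd_closed_def by blast

lemma umx_cf:
  assumes "umx rel S f" "inj h"
  shows "conflict_free rel S (h \<circ> f)"
  unfolding conflict_free_def
proof (intro allI impI)
  fix q assume "rel_set rel S q \<noteq> {}"
  then obtain s where s: "s \<in> rel_set rel S q" "\<forall>t\<in>rel_set rel S q. t \<noteq> s \<longrightarrow> f t < f s"
    using assms(1) unfolding umx_def by blast
  have "\<forall>t\<in>rel_set rel S q. t \<noteq> s \<longrightarrow> (h \<circ> f) t \<noteq> (h \<circ> f) s"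
  proof (intro ballI impI)
    fix t assume "t \<in> rel_set rel S q" "t \<noteq> s"
    then have "f t \<noteq> f s" using s by force
    then show "(h \<circ> f) t \<noteq> (h \<circ> f) s" using assms(2) by (auto dest: injD)
  qed
  then show "\<exists>s\<in>rel_set rel S q. \<forall>t\<in>rel_set rel S q. t \<noteq> s \<longrightarrow> (h \<circ> f) t \<noteq> (h \<circ> f) s"
    using s by blast
qed

lemma col_slot: "x \<in> cdom cf \<Longrightarrow> fst (col cf x) \<in> slots cf"
  by (induction cf) auto

lemma rel_set_Un: "rel_set rel (A \<union> B) q = rel_set rel A q \<union> rel_set rel B q"
  unfolding rel_set_def by auto

lemma rel_set_sub: "rel_set rel A q \<subseteq> A"
  unfolding rel_set_def by auto

locale sys =
  fixes rel :: "'q \<Rightarrow> 'o \<Rightarrow> bool" and F :: "'o set" and \<gamma> r :: "nat \<Rightarrow> nat"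
  assumes mono_g: "mono \<gamma>" and mono_r: "mono r"
    and hyp: "\<And>S0. finite S0 \<Longrightarrow> S0 \<subseteq> F \<Longrightarrow> \<exists>c0. allows_weak_deletions rel \<gamma> r S0 c0"
begin

abbreviation "wd \<equiv> WD rel \<gamma> r"

fun valid :: "'o cfg \<Rightarrow> bool" where
  "valid Em = True"
| "valid (Lf g) = wd (gT g) (gG g) (gc g)"
| "valid (Uc a b) = (valid a \<and> valid b \<and> cdom a \<inter> cdom b = {} \<and> slots a \<inter> slots b = {})"
| "valid (Ov a g V) = (valid a \<and> wd (gT g) (gG g) (gc g) \<and> gG g = cdom a \<and> V \<subseteq> gG g \<and>
      (\<forall>y\<in>gG g - V. \<forall>v\<in>V. gc g y \<le> gc g v) \<and> (\<forall>s\<in>slots a. s < gs g))"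

definition gsz :: "'o cfg \<Rightarrow> nat" where
  "gsz cf = sum_list (map (\<lambda>g. \<gamma> (card (gT g))) (groups cf))"

lemma valid_finite: "valid cf \<Longrightarrow> finite (cdom cf)"
  by (induction cf) (auto dest: WD_props)

lemma valid_umx: "valid cf \<Longrightarrow> umx rel (cdom cf) (col cf)"
proof (induction cf)
  case Em
  then show ?case unfolding umx_def rel_set_def by auto
next
  case (Lf g)
  then have u: "unimax rel (gG g) (gc g)" by (auto dest: WD_props)
  show ?case unfolding umx_def
  proof (intro allI impI)
    fix q assume "rel_set rel (cdom (Lf g)) q \<noteq> {}"
    then obtain s where "s \<in> rel_set rel (gG g) q" "\<forall>t\<in>rel_set rel (gG g) q. t \<noteq> s \<longrightarrow> gc g t < gc g s"
      using u unfolding unimax_def by auto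
    then show "\<exists>s\<in>rel_set rel (cdom (Lf g)) q. \<forall>t\<in>rel_set rel (cdom (Lf g)) q. t \<noteq> s \<longrightarrow> col (Lf g) t < col (Lf g) s"
      by auto
  qed
next
  case (Uc a b)
  then have va: "valid a" and vb: "valid b" and dj: "cdom a \<inter> cdom b = {}" and sd: "slots a \<inter> slots b = {}"
    by auto
  have ua: "umx rel (cdom a) (col a)" and ub: "umx rel (cdom b) (col b)" using Uc va vb by auto
  show ?case unfolding umx_def
  proof (intro allI impI)
    fix q assume ne: "rel_set rel (cdom (Uc a b)) q \<noteq> {}"
    define A where "A = rel_set rel (cdom a) q"
    define B where "B = rel_set rel (cdom b) q"
    have eq: "rel_set rel (cdom (Uc a b)) q = A \<union> B" by (simp add: rel_set_Un A_def B_def)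
    have As: "A \<subseteq> cdom a" "B \<subseteq> cdom b" unfolding A_def B_def by (rule rel_set_sub)+
    have ca: "col (Uc a b) t = col a t" if "t \<in> A" for t using that As by auto
    have cb: "col (Uc a b) t = col b t" if "t \<in> B" for t using that As dj by auto
    have ex: "\<exists>s\<in>A \<union> B. \<forall>t\<in>A \<union> B. t \<noteq> s \<longrightarrow> col (Uc a b) t < col (Uc a b) s"
    proof (cases "A = {}")
      case True
      then have "B \<noteq> {}" using ne eq by auto
      then obtain s where s: "s \<in> B" "\<forall>t\<in>B. t \<noteq> s \<longrightarrow> col b t < col b s" using ub[unfolded umx_def, rule_format, of q] unfolding B_def by blast
      show ?thesis
      proof (intro bexI[of _ s] ballI impI)
        fix t assume "t \<in> A \<union> B" "t \<noteq> s"
        then have "t \<in> B" using True by auto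
        then show "col (Uc a b) t < col (Uc a b) s" using s cb `t \<noteq> s` by simp
      qed (use s in simp)
    next
      case Af: False
      then obtain sa where sa: "sa \<in> A" "\<forall>t\<in>A. t \<noteq> sa \<longrightarrow> col a t < col a sa" using ua[unfolded umx_def, rule_format, of q] unfolding A_def by blast
      show ?thesis
      proof (cases "B = {}")
        case True
        show ?thesis
        proof (intro bexI[of _ sa] ballI impI)
          fix t assume "t \<in> A \<union> B" "t \<noteq> sa"
          then have "t \<in> A" using True by auto
          then show "col (Uc a b) t < col (Uc a b) sa" using sa ca `t \<noteq> sa` by simp
        qed (use sa in simp)
      next
        case False
        then obtain sb where sb: "sb \<in> B" "\<forall>t\<in>B. t \<noteq> sb \<longrightarrow> col b t < col b sb" using ub[unfolded umx_def, rule_format, of q] unfolding B_def by blast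
        have f1: "fst (col a sa) \<in> slots a" by (rule col_slot[OF subsetD[OF As(1) sa(1)]])
        have f2: "fst (col b sb) \<in> slots b" by (rule col_slot[OF subsetD[OF As(2) sb(1)]])
        have ne2: "col a sa \<noteq> col b sb"
        proof
          assume "col a sa = col b sb"
          then have "fst (col a sa) \<in> slots a \<inter> slots b" using f1 f2 by simp
          then show False using sd by simp
        qed
        have allA: "col a t \<le> col a sa" if "t \<in> A" for t using sa that by (cases "t = sa") auto
        have allB: "col b t \<le> col b sb" if "t \<in> B" for t using sb that by (cases "t = sb") auto
        show ?thesis
        proof (cases "col b sb < col a sa")
          case True
          show ?thesis
          proof (intro bexI[of _ sa] ballI impI)
            fix t assume t: "t \<in> A \<union> B" "t \<noteq> sa"
            show "col (Uc a b) t < col (Uc a b) sa"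
            proof (cases "t \<in> A")
              case True then show ?thesis using sa ca t(2) by simp
            next
              case False then have "t \<in> B" using t by simp
              then have "col (Uc a b) t \<le> col b sb" using allB cb by simp
              also have "\<dots> < col a sa" by fact
              also have "\<dots> = col (Uc a b) sa" using ca sa(1) by simp
              finally show ?thesis .
            qed
          qed (use sa in simp)
        next
          case False
          then have lt: "col a sa < col b sb" using ne2 by auto
          show ?thesis
          proof (intro bexI[of _ sb] ballI impI)
            fix t assume t: "t \<in> A \<union> B" "t \<noteq> sb"
            show "col (Uc a b) t < col (Uc a b) sb"
            proof (cases "t \<in> B")
              case True then show ?thesis using sb cb t(2) by simp
            next
              case False then have "t \<in> A" using t by simp
              then have "col (Uc a b) t \<le> col a sa" using allA ca by simp
              also have "\<dots> < col b sb" by fact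
              also have "\<dots> = col (Uc a b) sb" using cb sb(1) by simp
              finally show ?thesis .
            qed
          qed (use sb in simp)
        qed
      qed
    qed
    then show "\<exists>s\<in>rel_set rel (cdom (Uc a b)) q. \<forall>t\<in>rel_set rel (cdom (Uc a b)) q. t \<noteq> s \<longrightarrow> col (Uc a b) t < col (Uc a b) s"
      using eq by simp
  qed
next
  case (Ov a g V)
  then have va: "valid a" and w: "wd (gT g) (gG g) (gc g)" and G: "gG g = cdom a" and VG: "V \<subseteq> gG g"
    and th: "\<forall>y\<in>gG g - V. \<forall>v\<in>V. gc g y \<le> gc g v" and sl: "\<forall>s\<in>slots a. s < gs g" by auto
  have ua: "umx rel (cdom a) (col a)" using Ov va by auto
  have u: "unimax rel (gG g) (gc g)" using w by (auto dest: WD_props)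
  show ?case unfolding umx_def
  proof (intro allI impI)
    fix q assume ne: "rel_set rel (cdom (Ov a g V)) q \<noteq> {}"
    let ?A = "rel_set rel (cdom a) q"
    have A: "rel_set rel (cdom (Ov a g V)) q = ?A" by simp
    have As: "?A \<subseteq> cdom a" by (auto simp: rel_set_def)
    show "\<exists>s\<in>rel_set rel (cdom (Ov a g V)) q. \<forall>t\<in>rel_set rel (cdom (Ov a g V)) q. t \<noteq> s \<longrightarrow> col (Ov a g V) t < col (Ov a g V) s"
    proof (cases "?A \<inter> V = {}")
      case True
      then obtain s where s: "s \<in> ?A" "\<forall>t\<in>?A. t \<noteq> s \<longrightarrow> col a t < col a s" using ua[unfolded umx_def, rule_format, of q] ne by auto
      show ?thesis using s True by (intro bexI[of _ s]) auto
    next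
      case False
      then obtain v where v: "v \<in> ?A" "v \<in> V" by auto
      have "rel_set rel (gG g) q = ?A" using G by simp
      then obtain m where m: "m \<in> ?A" "\<forall>t\<in>?A. t \<noteq> m \<longrightarrow> gc g t < gc g m" using u[unfolded unimax_def, rule_format, of q] ne by auto
      have mV: "m \<in> V"
      proof (rule ccontr)
        assume "m \<notin> V"
        then have "m \<noteq> v" using v by auto
        then have "gc g v < gc g m" using m v by auto
        moreover have "gc g m \<le> gc g v" using th `m \<notin> V` m(1) As G v(2) by auto
        ultimately show False by simp
      qed
      show ?thesis
      proof (intro bexI[of _ m] ballI impI)
        fix t assume t: "t \<in> rel_set rel (cdom (Ov a g V)) q" "t \<noteq> m"
        show "col (Ov a g V) t < col (Ov a g V) m"
        proof (cases "t \<in> V")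
          case True then show ?thesis using m t mV by auto
        next
          case False
          have "t \<in> cdom a" using t As by auto
          then have "fst (col a t) < gs g" using col_slot[of t a] sl by blast
          then show ?thesis using False mV by (cases "col a t") auto
        qed
      qed (use m in auto)
    qed
  qed
qed

end


definition thr :: "('o \<Rightarrow> int) \<Rightarrow> 'o set \<Rightarrow> 'o set \<Rightarrow> bool" where
  "thr c G V \<longleftrightarrow> (\<forall>y\<in>G - V. \<forall>v\<in>V. c y \<le> c v)"

definition fixV :: "('o \<Rightarrow> int) \<Rightarrow> ('o \<Rightarrow> int) \<Rightarrow> 'o set \<Rightarrow> 'o set \<Rightarrow> 'o set" where
  "fixV c c' G V = (let V0 = {v \<in> V. v \<in> G \<and> c' v = c v} in
     if V0 = {} then {} else V0 \<union> {z \<in> G. Min (c' ` V0) < c' z})"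

definition mig1 :: "('o \<Rightarrow> int) \<Rightarrow> 'o set \<Rightarrow> 'o set \<Rightarrow> 'o set" where
  "mig1 c G V = (if G - V = {} then V else insert (SOME m. m \<in> G - V \<and> (\<forall>y\<in>G - V. c y \<le> c m)) V)"

definition migk :: "('o \<Rightarrow> int) \<Rightarrow> 'o set \<Rightarrow> nat \<Rightarrow> 'o set \<Rightarrow> 'o set" where
  "migk c G k V = (mig1 c G ^^ k) V"

lemma exists_max:
  assumes "finite A" "A \<noteq> {}"
  shows "\<exists>m. m \<in> A \<and> (\<forall>y\<in>A. (c::'o \<Rightarrow> int) y \<le> c m)"
proof -
  have "Max (c ` A) \<in> c ` A" using assms by simp
  then obtain m where m: "m \<in> A" "c m = Max (c ` A)" by auto
  have "\<forall>y\<in>A. c y \<le> c m" using m assms by simp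
  then show ?thesis using m by blast
qed

lemma mig1_props:
  assumes "finite G" "V \<subseteq> G" "thr c G V"
  shows "V \<subseteq> mig1 c G V" "mig1 c G V \<subseteq> G" "thr c G (mig1 c G V)"
    "card (mig1 c G V - V) \<le> 1" "card (G - mig1 c G V) = card (G - V) - 1"
proof -
  have "V \<subseteq> mig1 c G V \<and> mig1 c G V \<subseteq> G \<and> thr c G (mig1 c G V) \<and>
    card (mig1 c G V - V) \<le> 1 \<and> card (G - mig1 c G V) = card (G - V) - 1"
  proof (cases "G - V = {}")
    case True
    then show ?thesis using assms unfolding mig1_def by simp
  next
    case False
    have fin: "finite (G - V)" using assms by simp
    define m where "m = (SOME m. m \<in> G - V \<and> (\<forall>y\<in>G - V. c y \<le> c m))"
    have m: "m \<in> G - V \<and> (\<forall>y\<in>G - V. c y \<le> c m)"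
      unfolding m_def by (rule someI_ex) (rule exists_max[OF fin False])
    have e: "mig1 c G V = insert m V" using False unfolding mig1_def m_def by simp
    have t: "thr c G (insert m V)" using assms(3) m unfolding thr_def by auto
    have c1: "card (insert m V - V) \<le> 1"
    proof -
      have "insert m V - V \<subseteq> {m}" by auto
      then show ?thesis using card_mono[of "{m}"] by fastforce
    qed
    have "G - insert m V = (G - V) - {m}" by auto
    then have c2: "card (G - insert m V) = card (G - V) - 1" using m fin by simp
    show ?thesis using e t c1 c2 m assms(2) by auto
  qed
  then show "V \<subseteq> mig1 c G V" "mig1 c G V \<subseteq> G" "thr c G (mig1 c G V)"
    "card (mig1 c G V - V) \<le> 1" "card (G - mig1 c G V) = card (G - V) - 1" by auto
qed

lemma migk_props:
  assumes "finite G" "V \<subseteq> G" "thr c G V"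
  shows "V \<subseteq> migk c G k V \<and> migk c G k V \<subseteq> G \<and> thr c G (migk c G k V) \<and>
    card (migk c G k V - V) \<le> k \<and> card (G - migk c G k V) = card (G - V) - k"
proof (induction k)
  case 0
  then show ?case using assms unfolding migk_def by simp
next
  case (Suc k)
  let ?W = "migk c G k V"
  have W: "V \<subseteq> ?W" "?W \<subseteq> G" "thr c G ?W" "card (?W - V) \<le> k" "card (G - ?W) = card (G - V) - k"
    using Suc by auto
  have e: "migk c G (Suc k) V = mig1 c G ?W" unfolding migk_def by simp
  note P = mig1_props[OF assms(1) W(2) W(3)]
  have "mig1 c G ?W - V \<subseteq> (mig1 c G ?W - ?W) \<union> (?W - V)" by auto
  moreover have "finite (mig1 c G ?W - ?W)" "finite (?W - V)" using assms(1) P(2) W(2)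
    by (auto intro: finite_subset)
  ultimately have "card (mig1 c G ?W - V) \<le> card (mig1 c G ?W - ?W) + card (?W - V)"
    by (meson card_Un_le card_mono finite_UnI le_trans)
  then have "card (mig1 c G ?W - V) \<le> Suc k" using P(4) W(4) by simp
  then show ?case using e P W by auto
qed

lemma fixV_props:
  assumes fin: "finite G" and VG: "V \<subseteq> G" and th: "thr c G V"
  shows "fixV c c' G V \<subseteq> G" "thr c' G (fixV c c' G V)"
    "fixV c c' G V - V \<subseteq> {y \<in> G. c' y \<noteq> c y}" "V - fixV c c' G V \<subseteq> {y \<in> G. c' y \<noteq> c y}"
proof -
  define V0 where "V0 = {v \<in> V. v \<in> G \<and> c' v = c v}"
  have V0V: "V0 \<subseteq> V" unfolding V0_def by auto
  have "fixV c c' G V \<subseteq> G \<and> thr c' G (fixV c c' G V) \<and>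
    fixV c c' G V - V \<subseteq> {y \<in> G. c' y \<noteq> c y} \<and> V - fixV c c' G V \<subseteq> {y \<in> G. c' y \<noteq> c y}"
  proof (cases "V0 = {}")
    case True
    then have e: "fixV c c' G V = {}" unfolding fixV_def V0_def Let_def by simp
    have "V \<subseteq> {y \<in> G. c' y \<noteq> c y}" using True VG unfolding V0_def by auto
    then show ?thesis using e unfolding thr_def by auto
  next
    case False
    define m where "m = Min (c' ` V0)"
    have finV0: "finite V0" using fin VG V0V by (auto intro: finite_subset)
    have e: "fixV c c' G V = V0 \<union> {z \<in> G. m < c' z}" unfolding fixV_def Let_def V0_def[symmetric] m_def[symmetric] using False by simp
    have mle: "m \<le> c' v" if "v \<in> V0" for v unfolding m_def using finV0 that by simp
    have "m \<in> c' ` V0" unfolding m_def using finV0 False by simp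
    then obtain v0 where v0: "v0 \<in> V0" "c' v0 = m" by auto
    have s1: "V0 \<union> {z \<in> G. m < c' z} \<subseteq> G" using V0_def by auto
    have s2: "thr c' G (V0 \<union> {z \<in> G. m < c' z})"
      unfolding thr_def
    proof (intro ballI)
      fix y v assume y: "y \<in> G - (V0 \<union> {z \<in> G. m < c' z})" and v: "v \<in> V0 \<union> {z \<in> G. m < c' z}"
      then have "c' y \<le> m" by auto
      moreover have "m \<le> c' v" using v mle by force
      ultimately show "c' y \<le> c' v" by simp
    qed
    have s3: "V0 \<union> {z \<in> G. m < c' z} - V \<subseteq> {y \<in> G. c' y \<noteq> c y}"
    proof
      fix z assume z: "z \<in> V0 \<union> {z \<in> G. m < c' z} - V"
      then have zG: "z \<in> G" "z \<notin> V" "m < c' z" using V0V by auto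
      have "v0 \<in> V" "c' v0 = c v0" using v0 V0_def by auto
      have "c z \<le> c v0" using th zG `v0 \<in> V` unfolding thr_def by auto
      then have "c z \<le> m" using v0 `c' v0 = c v0` by simp
      then have "c' z \<noteq> c z" using zG by auto
      then show "z \<in> {y \<in> G. c' y \<noteq> c y}" using zG by simp
    qed
    have s4: "V - (V0 \<union> {z \<in> G. m < c' z}) \<subseteq> {y \<in> G. c' y \<noteq> c y}"
      using VG unfolding V0_def by auto
    show ?thesis using e s1 s2 s3 s4 by simp
  qed
  then show "fixV c c' G V \<subseteq> G" "thr c' G (fixV c c' G V)"
    "fixV c c' G V - V \<subseteq> {y \<in> G. c' y \<noteq> c y}" "V - fixV c c' G V \<subseteq> {y \<in> G. c' y \<noteq> c y}" by auto
qed

context sys begin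

lemma valid_groups: "valid cf \<Longrightarrow> g \<in> set (groups cf) \<Longrightarrow> wd (gT g) (gG g) (gc g) \<and> gG g \<subseteq> cdom cf"
  by (induction cf) auto

definition ncol :: "'o cfg \<Rightarrow> nat" where
  "ncol cf = sum_list (map (\<lambda>g. card (gc g ` gG g)) (groups cf))"

lemma card_col_ncol: "valid cf \<Longrightarrow> card (col cf ` cdom cf) \<le> ncol cf"
proof (induction cf)
  case Em
  then show ?case by (simp add: ncol_def)
next
  case (Lf g)
  have "finite (gG g)" using Lf by (auto dest: WD_props)
  have "col (Lf g) ` cdom (Lf g) = (\<lambda>v. (gs g, v)) ` (gc g ` gG g)" by auto
  also have "card \<dots> \<le> card (gc g ` gG g)" using `finite (gG g)` by (intro card_image_le) simp
  finally show ?case by (simp add: ncol_def)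
next
  case (Uc a b)
  then have va: "valid a" "valid b" and dj: "cdom a \<inter> cdom b = {}" by auto
  have "col (Uc a b) ` cdom (Uc a b) \<subseteq> col a ` cdom a \<union> col b ` cdom b" using dj by auto
  moreover have "finite (col a ` cdom a \<union> col b ` cdom b)" using va valid_finite by auto
  ultimately have "card (col (Uc a b) ` cdom (Uc a b)) \<le> card (col a ` cdom a) + card (col b ` cdom b)"
    by (meson card_Un_le card_mono le_trans)
  then show ?case using Uc va by (simp add: ncol_def)
next
  case (Ov a g V)
  then have va: "valid a" and VG: "V \<subseteq> gG g" and fG: "finite (gG g)" by (auto dest: WD_props)
  have "col (Ov a g V) ` cdom (Ov a g V) \<subseteq> (\<lambda>v. (gs g, v)) ` (gc g ` gG g) \<union> col a ` cdom a"
    using VG by auto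
  moreover have "finite ((\<lambda>v. (gs g, v)) ` (gc g ` gG g) \<union> col a ` cdom a)" using va valid_finite fG by auto
  ultimately have "card (col (Ov a g V) ` cdom (Ov a g V)) \<le> card ((\<lambda>v. (gs g, v)) ` (gc g ` gG g)) + card (col a ` cdom a)"
    by (meson card_Un_le card_mono le_trans)
  also have "card ((\<lambda>v. (gs g, v)) ` (gc g ` gG g)) \<le> card (gc g ` gG g)" using fG by (intro card_image_le) simp
  finally show ?case using Ov va by (simp add: ncol_def)
qed

lemma ncol_gsz: "valid cf \<Longrightarrow> ncol cf \<le> gsz cf"
proof -
  assume v: "valid cf"
  have "\<forall>g\<in>set (groups cf). card (gc g ` gG g) \<le> \<gamma> (card (gT g))"
    using valid_groups[OF v] WD_props(5) by blast
  then show ?thesis unfolding ncol_def gsz_def by (induction "groups cf") (auto intro: sum_list_mono)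
qed

lemma card_col: "valid cf \<Longrightarrow> card (col cf ` cdom cf) \<le> gsz cf"
  using card_col_ncol ncol_gsz le_trans by blast

lemma mult_hgt: "valid cf \<Longrightarrow> mult x cf \<le> hgt cf"
proof (induction cf)
  case (Uc a b)
  then have va: "valid a" "valid b" and dj: "cdom a \<inter> cdom b = {}" by auto
  have z: "mult x c = 0" if "valid c" "x \<notin> cdom c" for c
    using valid_groups[OF that(1)] that(2) unfolding mult_def by (auto simp: filter_empty_conv)
  have "mult x (Uc a b) = mult x a + mult x b" unfolding mult_def by simp
  show ?case
  proof (cases "x \<in> cdom a")
    case True
    then have "x \<notin> cdom b" using dj by auto
    then show ?thesis using Uc va z[of b] `mult x (Uc a b) = mult x a + mult x b` by simp
  next
    case False
    then show ?thesis using Uc va z[of a] `mult x (Uc a b) = mult x a + mult x b` by simp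
  qed
qed (auto simp: mult_def)

end


fun unm :: "'o cfg \<Rightarrow> nat" where
  "unm (Ov a g V) = card (gG g - V)"
| "unm _ = 0"

fun migc :: "nat \<Rightarrow> 'o cfg \<Rightarrow> 'o cfg" where
  "migc k (Ov a g V) = Ov a g (migk (gc g) (gG g) k V)"
| "migc k cf = cf"

context sys begin

definition wdel :: "'o grp \<Rightarrow> 'o \<Rightarrow> 'o grp" where
  "wdel g x = (if x \<in> gG g then Grp (gT g) (gG g - {x})
     (SOME c'. wd (gT g) (gG g - {x}) c' \<and> card {y \<in> gG g - {x}. c' y \<noteq> gc g y} \<le> r (card (gT g))) (gs g)
     else g)"

lemma wdel_props:
  assumes "wd (gT g) (gG g) (gc g)"
  shows "wd (gT (wdel g x)) (gG (wdel g x)) (gc (wdel g x))" "gT (wdel g x) = gT g"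
    "gG (wdel g x) = gG g - {x}" "gs (wdel g x) = gs g"
    "card {y \<in> gG g - {x}. gc (wdel g x) y \<noteq> gc g y} \<le> r (card (gT g))"
    "x \<notin> gG g \<Longrightarrow> wdel g x = g"
proof -
  have "wd (gT (wdel g x)) (gG (wdel g x)) (gc (wdel g x)) \<and> gT (wdel g x) = gT g \<and>
    gG (wdel g x) = gG g - {x} \<and> gs (wdel g x) = gs g \<and>
    card {y \<in> gG g - {x}. gc (wdel g x) y \<noteq> gc g y} \<le> r (card (gT g))"
  proof (cases "x \<in> gG g")
    case True
    let ?P = "\<lambda>c'. wd (gT g) (gG g - {x}) c' \<and> card {y \<in> gG g - {x}. c' y \<noteq> gc g y} \<le> r (card (gT g))"
    obtain c0 where "?P c0" using WD_del[OF assms True] by blast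
    then have "?P (SOME c'. ?P c')" by (rule someI[where P = ?P])
    then show ?thesis using True unfolding wdel_def by simp
  next
    case False
    then show ?thesis using assms unfolding wdel_def by simp
  qed
  then show "wd (gT (wdel g x)) (gG (wdel g x)) (gc (wdel g x))" "gT (wdel g x) = gT g"
    "gG (wdel g x) = gG g - {x}" "gs (wdel g x) = gs g"
    "card {y \<in> gG g - {x}. gc (wdel g x) y \<noteq> gc g y} \<le> r (card (gT g))" by auto
  show "x \<notin> gG g \<Longrightarrow> wdel g x = g" unfolding wdel_def by simp
qed

fun del :: "'o \<Rightarrow> 'o cfg \<Rightarrow> 'o cfg" where
  "del x Em = Em"
| "del x (Lf g) = Lf (wdel g x)"
| "del x (Uc a b) = Uc (del x a) (del x b)"
| "del x (Ov a g V) = (if x \<in> gG g then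
     (let g' = wdel g x; R = {y \<in> gG g'. gc g' y \<noteq> gc g y} in
       Ov (del x a) g' (migk (gc g') (gG g') (card R + 16) (fixV (gc g) (gc g') (gG g') (V - {x}))))
     else Ov (del x a) g V)"

fun dcost :: "'o \<Rightarrow> 'o cfg \<Rightarrow> nat" where
  "dcost x Em = 0"
| "dcost x (Lf g) = (if x \<in> gG g then r (card (gT g)) else 0)"
| "dcost x (Uc a b) = dcost x a + dcost x b"
| "dcost x (Ov a g V) = dcost x a + (if x \<in> gG g then 2 * r (card (gT g)) + 16 else 0)"

lemma del_nop: "valid cf \<Longrightarrow> x \<notin> cdom cf \<Longrightarrow> del x cf = cf"
  by (induction cf) (auto simp: wdel_def)

lemma del_valid:
  "valid cf \<Longrightarrow> valid (del x cf) \<and> cdom (del x cf) = cdom cf - {x} \<and> slots (del x cf) = slots cf \<and>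
     map gT (groups (del x cf)) = map gT (groups cf) \<and> hgt (del x cf) = hgt cf"
proof (induction cf)
  case (Lf g)
  then show ?case using wdel_props[of g x] by simp
next
  case (Uc a b)
  then show ?case by auto
next
  case (Ov a g V)
  then have va: "valid a" and w: "wd (gT g) (gG g) (gc g)" and G: "gG g = cdom a" and VG: "V \<subseteq> gG g"
    and th: "thr (gc g) (gG g) V" and sl: "\<forall>s\<in>slots a. s < gs g" by (auto simp: thr_def)
  have IH: "valid (del x a)" "cdom (del x a) = cdom a - {x}" "slots (del x a) = slots a"
    "map gT (groups (del x a)) = map gT (groups a)" "hgt (del x a) = hgt a" using Ov va by auto
  show ?case
  proof (cases "x \<in> gG g")
    case False
    then have xa: "x \<notin> cdom a" using G by simp
    have e2: "del x (Ov a g V) = Ov a g V" using False del_nop[OF va xa] by simp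
    have v0: "valid (Ov a g V)" by (rule Ov.prems)
    have c0: "cdom (Ov a g V) = cdom (Ov a g V) - {x}" using xa by simp
    show ?thesis unfolding e2 using v0 c0 by blast
  next
    case True
    define g' where "g' = wdel g x"
    define R where "R = {y \<in> gG g'. gc g' y \<noteq> gc g y}"
    define V1 where "V1 = fixV (gc g) (gc g') (gG g') (V - {x})"
    define V2 where "V2 = migk (gc g') (gG g') (card R + 16) V1"
    have e: "del x (Ov a g V) = Ov (del x a) g' V2" using True unfolding g'_def R_def V1_def V2_def by (simp add: Let_def)
    note W = wdel_props[OF w, of x, folded g'_def]
    have fG': "finite (gG g')" by (rule WD_props(3)[OF W(1)])
    have th0: "thr (gc g) (gG g') (V - {x})" using th W(3) unfolding thr_def by auto
    have VG0: "V - {x} \<subseteq> gG g'" using VG W(3) by auto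
    note F = fixV_props[OF fG' VG0 th0, of "gc g'", folded V1_def]
    note M = migk_props[OF fG' F(1) F(2), of "card R + 16", folded V2_def]
    have t: "thr (gc g') (gG g') V2" and s2: "V2 \<subseteq> gG g'" using M by blast+
    have d: "gG g' = cdom (del x a)" using W(3) G IH(2) by simp
    have sl': "\<forall>s\<in>slots (del x a). s < gs g'" using IH(3) W(4) sl by simp
    have "valid (Ov (del x a) g' V2)" using IH(1) W(1) d s2 t sl' unfolding thr_def by simp
    moreover have "cdom (Ov (del x a) g' V2) = cdom (Ov a g V) - {x}" using IH(2) by simp
    moreover have "slots (Ov (del x a) g' V2) = slots (Ov a g V)" using IH(3) W(4) by simp
    moreover have "map gT (groups (Ov (del x a) g' V2)) = map gT (groups (Ov a g V))" using IH(4) W(2) by simp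
    moreover have "hgt (Ov (del x a) g' V2) = hgt (Ov a g V)" using IH(5) by simp
    ultimately show ?thesis unfolding e by blast
  qed
qed simp

lemma del_cost:
  "valid cf \<Longrightarrow> card {y \<in> cdom cf - {x}. col (del x cf) y \<noteq> col cf y} \<le> dcost x cf"
proof (induction cf)
  case Em
  then show ?case by simp
next
  case (Lf g)
  have w: "wd (gT g) (gG g) (gc g)" using Lf by simp
  show ?case
  proof (cases "x \<in> gG g")
    case True
    have "{y \<in> cdom (Lf g) - {x}. col (del x (Lf g)) y \<noteq> col (Lf g) y} = {y \<in> gG g - {x}. gc (wdel g x) y \<noteq> gc g y}"
      using wdel_props(4)[OF w, of x] by auto
    then show ?thesis using wdel_props(5)[OF w, of x] True by simp
  next
    case False
    then show ?thesis using wdel_props(6)[OF w] by simp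
  qed
next
  case (Uc a b)
  then have va: "valid a" "valid b" by auto
  let ?C = "\<lambda>cf. {y \<in> cdom cf - {x}. col (del x cf) y \<noteq> col cf y}"
  have da: "cdom (del x a) = cdom a - {x}" using del_valid[OF va(1)] by simp
  have "?C (Uc a b) \<subseteq> ?C a \<union> ?C b" using da by auto
  moreover have "finite (?C a \<union> ?C b)" using va valid_finite by auto
  ultimately have "card (?C (Uc a b)) \<le> card (?C a) + card (?C b)" by (meson card_Un_le card_mono le_trans)
  then show ?case using Uc va by simp
next
  case (Ov a g V)
  then have va: "valid a" and w: "wd (gT g) (gG g) (gc g)" and G: "gG g = cdom a" and VG: "V \<subseteq> gG g"
    and th: "thr (gc g) (gG g) V" and sl: "\<forall>s\<in>slots a. s < gs g" by (auto simp: thr_def)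
  let ?C = "\<lambda>cf. {y \<in> cdom cf - {x}. col (del x cf) y \<noteq> col cf y}"
  have IH: "card (?C a) \<le> dcost x a" using Ov va by simp
  show ?case
  proof (cases "x \<in> gG g")
    case False
    then have "x \<notin> cdom a" using G by simp
    then show ?thesis using del_nop[OF Ov.prems] by simp
  next
    case True
    define g' where "g' = wdel g x"
    define R where "R = {y \<in> gG g'. gc g' y \<noteq> gc g y}"
    define V1 where "V1 = fixV (gc g) (gc g') (gG g') (V - {x})"
    define V2 where "V2 = migk (gc g') (gG g') (card R + 16) V1"
    have e: "del x (Ov a g V) = Ov (del x a) g' V2" using True unfolding g'_def R_def V1_def V2_def by (simp add: Let_def)
    note W = wdel_props[OF w, of x, folded g'_def]
    have fG': "finite (gG g')" by (rule WD_props(3)[OF W(1)])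
    have th0: "thr (gc g) (gG g') (V - {x})" using th W(3) unfolding thr_def by auto
    have VG0: "V - {x} \<subseteq> gG g'" using VG W(3) by auto
    note F = fixV_props[OF fG' VG0 th0, of "gc g'", folded V1_def R_def]
    note M = migk_props[OF fG' F(1) F(2), of "card R + 16", folded V2_def]
    have Rc: "card R \<le> r (card (gT g))" using W(5) W(3) unfolding R_def by simp
    have sub: "?C (Ov a g V) \<subseteq> ?C a \<union> R \<union> (V2 - V1)"
    proof
      fix y assume y: "y \<in> ?C (Ov a g V)"
      then have yG: "y \<in> gG g'" "y \<noteq> x" using G W(3) by auto
      have cy: "col (Ov (del x a) g' V2) y \<noteq> col (Ov a g V) y" using y e by simp
      show "y \<in> ?C a \<union> R \<union> (V2 - V1)"
      proof (cases "y \<in> V2")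
        case True
        show ?thesis
        proof (cases "y \<in> V")
          case True
          then have "gc g' y \<noteq> gc g y" using cy `y \<in> V2` W(4) by auto
          then show ?thesis using yG unfolding R_def by simp
        next
          case False
          then show ?thesis using F(3) `y \<in> V2` yG by auto
        qed
      next
        case False
        then have "y \<notin> V1" using M by auto
        show ?thesis
        proof (cases "y \<in> V")
          case True
          then show ?thesis using F(4) `y \<notin> V1` yG by auto
        next
          case False
          then have "col (del x a) y \<noteq> col a y" using cy `y \<notin> V2` by simp
          then show ?thesis using yG G W(3) by simp
        qed
      qed
    qed
    have fin: "finite (?C a \<union> R \<union> (V2 - V1))" using valid_finite[OF va] fG' M unfolding R_def
      by (auto intro: finite_subset)
    have "card (?C (Ov a g V)) \<le> card (?C a \<union> R \<union> (V2 - V1))" using card_mono[OF fin sub] .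
    also have "\<dots> \<le> card (?C a) + card R + card (V2 - V1)"
      by (meson card_Un_le add_le_mono le_refl le_trans)
    also have "\<dots> \<le> dcost x a + r (card (gT g)) + (r (card (gT g)) + 16)" using IH Rc M by simp
    finally show ?thesis using True by simp
  qed
qed

lemma dcost_bound: "valid cf \<Longrightarrow> allT M cf \<Longrightarrow> dcost x cf \<le> mult x cf * (2 * r M + 16)"
proof (induction cf)
  case (Lf g)
  then have "r (card (gT g)) \<le> r M" using mono_r unfolding allT_def by (simp add: monoD)
  then show ?case by (simp add: mult_def)
next
  case (Uc a b)
  then have "dcost x a \<le> mult x a * (2 * r M + 16)" "dcost x b \<le> mult x b * (2 * r M + 16)"
    unfolding allT_def by auto
  then show ?case unfolding mult_def by (simp add: add_mult_distrib)
next
  case (Ov a g V)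
  then have "dcost x a \<le> mult x a * (2 * r M + 16)" unfolding allT_def by auto
  moreover have "r (card (gT g)) \<le> r M" using Ov.prems mono_r unfolding allT_def by (simp add: monoD)
  ultimately show ?case unfolding mult_def by auto
qed simp

lemma del_unm:
  assumes "valid (Ov a g V)"
  shows "unm (del x (Ov a g V)) \<le> (if x \<in> gG g then unm (Ov a g V) - 16 else unm (Ov a g V))"
proof (cases "x \<in> gG g")
  case False
  then show ?thesis by simp
next
  case True
  then have va: "valid a" and w: "wd (gT g) (gG g) (gc g)" and G: "gG g = cdom a" and VG: "V \<subseteq> gG g"
    and th: "thr (gc g) (gG g) V" using assms by (auto simp: thr_def)
  define g' where "g' = wdel g x"
  define R where "R = {y \<in> gG g'. gc g' y \<noteq> gc g y}"
  define V1 where "V1 = fixV (gc g) (gc g') (gG g') (V - {x})"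
  define V2 where "V2 = migk (gc g') (gG g') (card R + 16) V1"
  have e: "del x (Ov a g V) = Ov (del x a) g' V2" using True unfolding g'_def R_def V1_def V2_def by (simp add: Let_def)
  note W = wdel_props[OF w, of x, folded g'_def]
  have fG': "finite (gG g')" by (rule WD_props(3)[OF W(1)])
  have fG: "finite (gG g)" by (rule WD_props(3)[OF w])
  have th0: "thr (gc g) (gG g') (V - {x})" using th W(3) unfolding thr_def by auto
  have VG0: "V - {x} \<subseteq> gG g'" using VG W(3) by auto
  note F = fixV_props[OF fG' VG0 th0, of "gc g'", folded V1_def R_def]
  note M = migk_props[OF fG' F(1) F(2), of "card R + 16", folded V2_def]
  have "gG g' - V1 \<subseteq> (gG g - V) \<union> R" using F(4) W(3) by auto
  moreover have "finite ((gG g - V) \<union> R)" using fG' fG unfolding R_def by auto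
  ultimately have "card (gG g' - V1) \<le> card (gG g - V) + card R"
    by (meson card_Un_le card_mono le_trans)
  then have "card (gG g' - V2) \<le> card (gG g - V) - 16" using M by simp
  then show ?thesis using e True by simp
qed

lemma del_unm_le: assumes "valid cf" shows "unm (del x cf) \<le> unm cf"
proof (cases cf)
  case (Ov a g V)
  have h: "unm (del x (Ov a g V)) \<le> (if x \<in> gG g then unm (Ov a g V) - 16 else unm (Ov a g V))"
    using del_unm[of a g V x] assms Ov by blast
  show ?thesis unfolding Ov using h by (simp del: del.simps unm.simps split: if_splits)
qed (auto simp: wdel_def)

lemma migc_props:
  assumes "valid cf"
  shows "valid (migc k cf)" "cdom (migc k cf) = cdom cf" "slots (migc k cf) = slots cf"
    "groups (migc k cf) = groups cf" "hgt (migc k cf) = hgt cf" "unm (migc k cf) = unm cf - k"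
    "card {y \<in> cdom cf. col (migc k cf) y \<noteq> col cf y} \<le> k"
proof -
  have "valid (migc k cf) \<and> cdom (migc k cf) = cdom cf \<and> slots (migc k cf) = slots cf \<and>
    groups (migc k cf) = groups cf \<and> hgt (migc k cf) = hgt cf \<and> unm (migc k cf) = unm cf - k \<and>
    card {y \<in> cdom cf. col (migc k cf) y \<noteq> col cf y} \<le> k"
  proof (cases cf)
    case (Ov a g V)
    then have va: "valid a" and w: "wd (gT g) (gG g) (gc g)" and G: "gG g = cdom a" and VG: "V \<subseteq> gG g"
      and th: "thr (gc g) (gG g) V" and sl: "\<forall>s\<in>slots a. s < gs g" using assms by (auto simp: thr_def)
    have fG: "finite (gG g)" by (rule WD_props(3)[OF w])
    define V2 where "V2 = migk (gc g) (gG g) k V"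
    note M = migk_props[OF fG VG th, of k, folded V2_def]
    have "{y \<in> cdom cf. col (migc k cf) y \<noteq> col cf y} \<subseteq> V2 - V" using Ov V2_def M by auto
    then have "card {y \<in> cdom cf. col (migc k cf) y \<noteq> col cf y} \<le> k"
      using M fG by (meson card_mono finite_Diff finite_subset le_trans)
    moreover have "valid (migc k cf)" using Ov va w G M sl unfolding V2_def thr_def by auto
    moreover have "cdom (migc k cf) = cdom cf" "slots (migc k cf) = slots cf" "groups (migc k cf) = groups cf"
      "hgt (migc k cf) = hgt cf" using Ov by simp_all
    moreover have "unm (migc k cf) = unm cf - k" using Ov M unfolding V2_def by simp
    ultimately show ?thesis by blast
  qed (use assms in auto)
  then show "valid (migc k cf)" "cdom (migc k cf) = cdom cf" "slots (migc k cf) = slots cf"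
    "groups (migc k cf) = groups cf" "hgt (migc k cf) = hgt cf" "unm (migc k cf) = unm cf - k"
    "card {y \<in> cdom cf. col (migc k cf) y \<noteq> col cf y} \<le> k" by auto
qed

end


fun Lc :: "(nat \<times> 'o cfg) list \<Rightarrow> 'o cfg" where
  "Lc [] = Em"
| "Lc ((j, b) # xs) = Uc b (Lc xs)"

fun isc :: "'o cfg \<Rightarrow> bool" where
  "isc (Lf g) = True"
| "isc (Ov a g V) = (V = gG g)"
| "isc _ = False"

fun toLf :: "'o cfg \<Rightarrow> 'o cfg" where
  "toLf (Ov a g V) = Lf g"
| "toLf b = b"

fun shp :: "'o cfg \<Rightarrow> bool" where
  "shp (Lf g) = True"
| "shp (Ov a g V) = True"
| "shp _ = False"

fun split_pre :: "nat \<Rightarrow> (nat \<times> 'o cfg) list \<Rightarrow> (nat \<times> 'o cfg) list \<times> (nat \<times> 'o cfg) list" where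
  "split_pre k [] = ([], [])"
| "split_pre k ((j, b) # xs) = (if j = k then (let (p, q) = split_pre (Suc k) xs in ((j, b) # p, q)) else ([], (j, b) # xs))"

definition tau :: "(nat \<times> 'o cfg) list \<Rightarrow> nat" where
  "tau xs = sum_list (map (\<lambda>(j, b). 2 ^ j) xs)"

definition migL :: "nat \<Rightarrow> (nat \<times> 'o cfg) list \<Rightarrow> (nat \<times> 'o cfg) list" where
  "migL k xs = map (\<lambda>(j, b). (j, migc k b)) xs"

fun sinc :: "(nat \<times> 'o cfg) list \<Rightarrow> bool" where
  "sinc [] = True"
| "sinc ((j, b) # xs) = ((\<forall>p\<in>set xs. j < fst p) \<and> sinc xs)"

lemma Lc_append: "cdom (Lc (p @ q)) = cdom (Lc p) \<union> cdom (Lc q)" "slots (Lc (p @ q)) = slots (Lc p) \<union> slots (Lc q)"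
  "groups (Lc (p @ q)) = groups (Lc p) @ groups (Lc q)"
  by (induction p rule: Lc.induct) auto

lemma Lc_col_append: "y \<in> cdom (Lc p) \<Longrightarrow> col (Lc (p @ q)) y = col (Lc p) y"
  "y \<notin> cdom (Lc p) \<Longrightarrow> col (Lc (p @ q)) y = col (Lc q) y"
  by (induction p rule: Lc.induct) (auto simp: Lc_append)

lemma sinc_append: "sinc (p @ q) \<Longrightarrow> sinc p \<and> sinc q"
  by (induction p rule: sinc.induct) auto

lemma tau_append: "tau (p @ q) = tau p + tau q"
  unfolding tau_def by simp

lemma tau_Cons: "tau ((j, b) # xs) = 2 ^ j + tau xs"
  unfolding tau_def by simp

lemma tau_ge: "(j, b) \<in> set xs \<Longrightarrow> 2 ^ j \<le> tau xs"
  by (induction xs) (auto simp: tau_def)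

lemma len_tau: "sinc xs \<Longrightarrow> \<forall>p\<in>set xs. k \<le> fst p \<Longrightarrow> 2 ^ k * (2 ^ length xs - 1) \<le> tau xs"
proof (induction xs arbitrary: k)
  case Nil
  then show ?case by (simp add: tau_def)
next
  case (Cons a xs)
  obtain j b where a: "a = (j, b)" by (cases a)
  have jk: "k \<le> j" using Cons.prems a by auto
  have "\<forall>p\<in>set xs. Suc k \<le> fst p" using Cons.prems a jk by auto
  moreover have "sinc xs" using Cons.prems a by simp
  ultimately have IH: "2 ^ Suc k * (2 ^ length xs - 1) \<le> tau xs" using Cons.IH[of "Suc k"] by blast
  have "(2::nat) ^ k \<le> 2 ^ j" using jk by (simp add: power_increasing)
  have p1: "(1::nat) \<le> 2 ^ length xs" by simp
  define L where "L = (2::nat) ^ length xs - 1"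
  have L: "(2::nat) ^ length xs = Suc L" using p1 unfolding L_def by simp
  have "(2::nat) ^ k * (2 ^ length (a # xs) - 1) = 2 ^ k + 2 ^ Suc k * (2 ^ length xs - 1)"
    using L by (simp add: algebra_simps)
  also have "\<dots> \<le> 2 ^ j + tau xs" by (rule add_mono[OF `(2::nat) ^ k \<le> 2 ^ j` IH])
  finally show ?case using a by (simp add: tau_Cons)
qed

lemma Lc_hgt: "\<forall>p\<in>set xs. hgt (snd p) \<le> 2 \<Longrightarrow> hgt (Lc xs) \<le> 2"
  by (induction xs rule: Lc.induct) auto

lemma migk_full: "migk c G k G = G"
proof -
  have "mig1 c G G = G" unfolding mig1_def by simp
  then show ?thesis unfolding migk_def by (induction k) auto
qed

context sys begin

lemma valid_Lc_append: "valid (Lc (p @ q)) \<longleftrightarrow> valid (Lc p) \<and> valid (Lc q) \<and>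
   cdom (Lc p) \<inter> cdom (Lc q) = {} \<and> slots (Lc p) \<inter> slots (Lc q) = {}"
  by (induction p rule: Lc.induct) (auto simp: Lc_append)

lemma migL_props:
  assumes "valid (Lc xs)"
  shows "valid (Lc (migL k xs))" "cdom (Lc (migL k xs)) = cdom (Lc xs)" "slots (Lc (migL k xs)) = slots (Lc xs)"
    "groups (Lc (migL k xs)) = groups (Lc xs)" "hgt (Lc (migL k xs)) = hgt (Lc xs)"
    "card {y \<in> cdom (Lc xs). col (Lc (migL k xs)) y \<noteq> col (Lc xs) y} \<le> k * length xs"
proof -
  have "valid (Lc (migL k xs)) \<and> cdom (Lc (migL k xs)) = cdom (Lc xs) \<and> slots (Lc (migL k xs)) = slots (Lc xs) \<and>
    groups (Lc (migL k xs)) = groups (Lc xs) \<and> hgt (Lc (migL k xs)) = hgt (Lc xs) \<and>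
    card {y \<in> cdom (Lc xs). col (Lc (migL k xs)) y \<noteq> col (Lc xs) y} \<le> k * length xs"
    using assms
  proof (induction xs rule: Lc.induct)
    case 1
    then show ?case by (simp add: migL_def)
  next
    case (2 j b xs)
    then have vb: "valid b" and vx: "valid (Lc xs)" and dj: "cdom b \<inter> cdom (Lc xs) = {}"
      and sd: "slots b \<inter> slots (Lc xs) = {}" by auto
    have IH: "valid (Lc (migL k xs))" "cdom (Lc (migL k xs)) = cdom (Lc xs)" "slots (Lc (migL k xs)) = slots (Lc xs)"
      "groups (Lc (migL k xs)) = groups (Lc xs)" "hgt (Lc (migL k xs)) = hgt (Lc xs)"
      "card {y \<in> cdom (Lc xs). col (Lc (migL k xs)) y \<noteq> col (Lc xs) y} \<le> k * length xs"
      using 2 vx by auto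
    note M = migc_props[OF vb, of k]
    have e: "Lc (migL k ((j, b) # xs)) = Uc (migc k b) (Lc (migL k xs))" by (simp add: migL_def)
    let ?C1 = "{y \<in> cdom b. col (migc k b) y \<noteq> col b y}"
    let ?C2 = "{y \<in> cdom (Lc xs). col (Lc (migL k xs)) y \<noteq> col (Lc xs) y}"
    have sub: "{y \<in> cdom (Lc ((j, b) # xs)). col (Lc (migL k ((j, b) # xs))) y \<noteq> col (Lc ((j, b) # xs)) y} \<subseteq> ?C1 \<union> ?C2"
      using e M(2) by auto
    have fin: "finite (?C1 \<union> ?C2)" using valid_finite[OF vb] valid_finite[OF vx] by auto
    have "card {y \<in> cdom (Lc ((j, b) # xs)). col (Lc (migL k ((j, b) # xs))) y \<noteq> col (Lc ((j, b) # xs)) y}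
       \<le> card (?C1 \<union> ?C2)" by (rule card_mono[OF fin sub])
    also have "\<dots> \<le> card ?C1 + card ?C2" by (rule card_Un_le)
    also have "\<dots> \<le> k + k * length xs" using M(7) IH(6) by simp
    finally have c: "card {y \<in> cdom (Lc ((j, b) # xs)). col (Lc (migL k ((j, b) # xs))) y \<noteq> col (Lc ((j, b) # xs)) y}
       \<le> k * length ((j, b) # xs)" by simp
    have "valid (Lc (migL k ((j, b) # xs)))" using e M IH dj sd vb by simp
    then show ?case using e M IH c by simp
  qed
  then show "valid (Lc (migL k xs))" "cdom (Lc (migL k xs)) = cdom (Lc xs)" "slots (Lc (migL k xs)) = slots (Lc xs)"
    "groups (Lc (migL k xs)) = groups (Lc xs)" "hgt (Lc (migL k xs)) = hgt (Lc xs)"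
    "card {y \<in> cdom (Lc xs). col (Lc (migL k xs)) y \<noteq> col (Lc xs) y} \<le> k * length xs" by auto
qed

lemma gsz_Uc: "gsz (Uc a b) = gsz a + gsz b" and gsz_Ov: "gsz (Ov a g V) = \<gamma> (card (gT g)) + gsz a"
  and gsz_Lf: "gsz (Lf g) = \<gamma> (card (gT g))" and gsz_Em: "gsz Em = 0"
  unfolding gsz_def by auto

lemma gsz_Lc: "gsz (Lc xs) = sum_list (map (\<lambda>p. gsz (snd p)) xs)"
  by (induction xs rule: Lc.induct) (auto simp: gsz_Uc gsz_Em)

definition gS :: "nat \<Rightarrow> nat" where
  "gS a = (\<Sum>i\<le>a. \<gamma> (2 ^ i))"

lemma gS_mono: "a \<le> b \<Longrightarrow> gS a \<le> gS b"
  unfolding gS_def by (intro sum_mono2) auto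

lemma g_le_gS: "m \<le> 2 ^ i \<Longrightarrow> i \<le> a \<Longrightarrow> \<gamma> m \<le> gS a"
proof -
  assume "m \<le> 2 ^ i" "i \<le> a"
  then have "\<gamma> m \<le> \<gamma> (2 ^ i)" using mono_g by (simp add: monoD)
  also have "\<dots> \<le> gS a" unfolding gS_def using `i \<le> a` by (intro member_le_sum) auto
  finally show ?thesis .
qed

definition blk_ok :: "nat \<Rightarrow> nat \<Rightarrow> 'o cfg \<Rightarrow> bool" where
  "blk_ok j low b \<longleftrightarrow> valid b \<and> shp b \<and> hgt b \<le> 2 \<and> allT (2 ^ j) b \<and> gsz b \<le> 2 * gS j \<and>
     (isc b \<or> unm b + 2 * low \<le> 2 ^ j) \<and> (j = 0 \<longrightarrow> isc b)"

fun bl_ok :: "nat \<Rightarrow> (nat \<times> 'o cfg) list \<Rightarrow> bool" where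
  "bl_ok low [] = True"
| "bl_ok low ((j, b) # xs) = (blk_ok j low b \<and> bl_ok (low + 2 ^ j) xs)"

lemma blk_mig: "blk_ok j low b \<Longrightarrow> blk_ok j (Suc low) (migc 2 b)"
proof -
  assume a: "blk_ok j low b"
  then have v: "valid b" unfolding blk_ok_def by simp
  note M = migc_props[OF v, of 2]
  have gs: "gsz (migc 2 b) = gsz b" using M(4) unfolding gsz_def by simp
  have at: "allT (2^j) (migc 2 b) = allT (2^j) b" using M(4) unfolding allT_def by simp
  have sh: "shp (migc 2 b) = shp b" by (cases b) auto
  have ic: "isc (migc 2 b)" if "isc b" using that by (cases b) (auto simp: migk_full)
  have "isc (migc 2 b) \<or> unm (migc 2 b) + 2 * Suc low \<le> 2 ^ j"
  proof (cases "isc b")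
    case True then show ?thesis using ic by simp
  next
    case False
    then have "unm b + 2 * low \<le> 2 ^ j" using a unfolding blk_ok_def by simp
    then show ?thesis
    proof (cases "unm b \<ge> 2")
      case True
      then have "unm (migc 2 b) + 2 * Suc low = unm b + 2 * low" using M(6) by simp
      then show ?thesis using `unm b + 2 * low \<le> 2 ^ j` by simp
    next
      case False
      then have "unm (migc 2 b) = 0" using M(6) by simp
      then show ?thesis using v M(1) sh a unfolding blk_ok_def
        by (cases "migc 2 b") (auto dest!: WD_props(3) simp: card_eq_0_iff)
    qed
  qed
  then show ?thesis using a M gs at sh ic unfolding blk_ok_def by auto
qed

lemma bl_mig: "bl_ok low xs \<Longrightarrow> bl_ok (Suc low) (migL 2 xs)"
proof (induction xs arbitrary: low)
  case Nil
  then show ?case by (simp add: migL_def)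
next
  case (Cons a xs)
  obtain j b where a: "a = (j, b)" by (cases a)
  have "blk_ok j (Suc low) (migc 2 b)" using Cons a blk_mig by auto
  moreover have "bl_ok (Suc (low + 2 ^ j)) (migL 2 xs)" using Cons a by auto
  ultimately show ?case using a by (simp add: migL_def)
qed

end


definition toLfL :: "(nat \<times> 'o cfg) list \<Rightarrow> (nat \<times> 'o cfg) list" where
  "toLfL p = map (\<lambda>(j, b). (j, toLf b)) p"

context sys begin

definition c0 :: "'o set \<Rightarrow> ('o \<Rightarrow> int)" where
  "c0 T = (SOME c. wd T T c)"

lemma c0_wd: "finite T \<Longrightarrow> T \<subseteq> F \<Longrightarrow> wd T T (c0 T)"
proof -
  assume a: "finite T" "T \<subseteq> F"
  then obtain c where "allows_weak_deletions rel \<gamma> r T c" using hyp by blast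
  then have "wd T T c" using WD_start a by blast
  then show ?thesis unfolding c0_def by (rule someI[where P = "\<lambda>c. wd T T c"])
qed

lemma blk_low_mono: "blk_ok j low b \<Longrightarrow> low' \<le> low \<Longrightarrow> blk_ok j low' b"
  unfolding blk_ok_def by auto

lemma blk_full: assumes "blk_ok j (2 ^ j - 1) b" shows "isc b"
proof (rule ccontr)
  assume n: "\<not> isc b"
  then have j: "j \<noteq> 0" and u: "unm b + 2 * (2 ^ j - 1) \<le> 2 ^ j" using assms unfolding blk_ok_def by auto
  have "(2::nat) \<le> 2 ^ j" using j by (simp add: self_le_power)
  then have "unm b = 0" using u by linarith
  moreover have v: "valid b" "shp b" using assms unfolding blk_ok_def by auto
  ultimately show False using n
    by (cases b) (auto dest!: WD_props(3) simp: card_eq_0_iff)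
qed

definition newblk :: "'o grp \<Rightarrow> nat \<Rightarrow> (nat \<times> 'o cfg) list \<Rightarrow> 'o cfg" where
  "newblk sg sl p = (let src = Uc (Lf sg) (Lc (toLfL p)); T = cdom src in Ov src (Grp T T (c0 T) sl) {})"

definition carry :: "'o grp \<Rightarrow> nat \<Rightarrow> (nat \<times> 'o cfg) list \<Rightarrow> (nat \<times> 'o cfg) list" where
  "carry sg sl xs = (case split_pre 0 xs of (p, q) \<Rightarrow>
     if p = [] then (0, Lf sg) # q else (length p, newblk sg sl p) # q)"

lemma split_pre_props:
  assumes "bl_ok (2 ^ k - 1) xs" "sinc xs" "\<forall>p\<in>set xs. k \<le> fst p" "split_pre k xs = (p, q)"
  shows "xs = p @ q \<and> (\<forall>pb\<in>set p. isc (snd pb) \<and> blk_ok (fst pb) 0 (snd pb)) \<and> map fst p = [k..<k + length p] \<and>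
    bl_ok (2 ^ (k + length p) - 1) q \<and> (\<forall>pb\<in>set q. k + length p < fst pb) \<and> sinc q \<and>
    tau p + 2 ^ k = 2 ^ (k + length p)"
  using assms
proof (induction xs arbitrary: k p q)
  case Nil
  then show ?case by (simp add: tau_def)
next
  case (Cons a ys)
  obtain j b where a: "a = (j, b)" by (cases a)
  show ?case
  proof (cases "j = k")
    case False
    then have pq: "p = []" "q = a # ys" using Cons.prems(4) a by auto
    have "\<forall>pb\<in>set q. k < fst pb" using Cons.prems(2,3) a False pq by fastforce
    then show ?thesis using pq Cons.prems by (simp add: tau_def)
  next
    case True
    obtain p' q' where sp: "split_pre (Suc k) ys = (p', q')" by (cases "split_pre (Suc k) ys")
    have pq: "p = (j, b) # p'" "q = q'" using Cons.prems(4) a True sp by auto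
    have bk: "blk_ok k (2 ^ k - 1) b" and bl: "bl_ok (2 ^ k - 1 + 2 ^ k) ys" using Cons.prems(1) a True by auto
    have e: "(2::nat) ^ k - 1 + 2 ^ k = 2 ^ Suc k - 1" by simp
    have bl': "bl_ok (2 ^ Suc k - 1) ys" using bl e by simp
    have si: "sinc ys" and gt: "\<forall>pb\<in>set ys. Suc k \<le> fst pb" using Cons.prems(2) a True by auto
    note IH = Cons.IH[OF bl' si gt sp]
    have ib: "isc b" using blk_full bk by blast
    have b0: "blk_ok k 0 b" using blk_low_mono[OF bk] by simp
    have m: "map fst p = [k..<k + length p]" using IH pq True by (simp add: upt_rec)
    have t: "tau p + 2 ^ k = 2 ^ (k + length p)" using IH pq True by (simp add: tau_Cons)
    show ?thesis using IH pq m t ib b0 a True by auto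
  qed
qed

lemma toLfL_props:
  assumes "valid (Lc p)" "\<forall>pb\<in>set p. isc (snd pb) \<and> blk_ok (fst pb) 0 (snd pb)"
  shows "valid (Lc (toLfL p)) \<and> cdom (Lc (toLfL p)) = cdom (Lc p) \<and> slots (Lc (toLfL p)) \<subseteq> slots (Lc p) \<and>
    (\<forall>y\<in>cdom (Lc p). col (Lc (toLfL p)) y = col (Lc p) y) \<and>
    gsz (Lc (toLfL p)) \<le> sum_list (map (\<lambda>pb. \<gamma> (2 ^ fst pb)) p) \<and>
    card (cdom (Lc p)) \<le> tau p \<and> hgt (Lc (toLfL p)) \<le> 1 \<and>
    (\<forall>g\<in>set (groups (Lc (toLfL p))). \<exists>pb\<in>set p. card (gT g) \<le> 2 ^ fst pb)"
  using assms
proof (induction p rule: Lc.induct)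
  case 1
  then show ?case by (simp add: toLfL_def gsz_Em tau_def)
next
  case (2 j b xs)
  then have vb: "valid b" and vx: "valid (Lc xs)" and dj: "cdom b \<inter> cdom (Lc xs) = {}"
    and sd: "slots b \<inter> slots (Lc xs) = {}" and ib: "isc b" and bk: "blk_ok j 0 b" by auto
  have IH: "valid (Lc (toLfL xs)) \<and> cdom (Lc (toLfL xs)) = cdom (Lc xs) \<and> slots (Lc (toLfL xs)) \<subseteq> slots (Lc xs) \<and>
    (\<forall>y\<in>cdom (Lc xs). col (Lc (toLfL xs)) y = col (Lc xs) y) \<and>
    gsz (Lc (toLfL xs)) \<le> sum_list (map (\<lambda>pb. \<gamma> (2 ^ fst pb)) xs) \<and>
    card (cdom (Lc xs)) \<le> tau xs \<and> hgt (Lc (toLfL xs)) \<le> 1 \<and>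
    (\<forall>g\<in>set (groups (Lc (toLfL xs))). \<exists>pb\<in>set xs. card (gT g) \<le> 2 ^ fst pb)" using 2 vx by auto
  have at: "allT (2 ^ j) b" using bk unfolding blk_ok_def by simp
  obtain g where tb: "toLf b = Lf g" and wg: "wd (gT g) (gG g) (gc g)" and cb: "cdom b = gG g"
    and sb: "slots (toLf b) \<subseteq> slots b" and colb: "\<forall>y\<in>cdom b. col (toLf b) y = col b y"
    and gT: "card (gT g) \<le> 2 ^ j"
  proof (cases b)
    case (Lf g)
    have "toLf b = Lf g" "wd (gT g) (gG g) (gc g)" "cdom b = gG g" "slots (toLf b) \<subseteq> slots b"
      "\<forall>y\<in>cdom b. col (toLf b) y = col b y" "card (gT g) \<le> 2 ^ j"
      using vb at Lf unfolding allT_def by simp_all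
    then show ?thesis by (rule that)
  next
    case (Ov a g V)
    from vb[unfolded Ov valid.simps] have w1: "wd (gT g) (gG g) (gc g)" and w2: "gG g = cdom a" by blast+
    have A: "toLf b = Lf g" "wd (gT g) (gG g) (gc g)" "cdom b = gG g" "slots (toLf b) \<subseteq> slots b"
      "card (gT g) \<le> 2 ^ j"
      using w1 w2 at Ov unfolding allT_def by simp_all
    have B: "\<forall>y\<in>cdom b. col (toLf b) y = col b y" using ib Ov w2 by simp
    show ?thesis using A(1-4) B A(5) by (rule that)
  qed (use ib in simp_all)
  have fg: "finite (gT g)" "gG g \<subseteq> gT g" using WD_props[OF wg] by auto
  have ccb: "card (cdom b) \<le> 2 ^ j" using card_mono[OF fg] gT cb by simp
  have e: "Lc (toLfL ((j, b) # xs)) = Uc (Lf g) (Lc (toLfL xs))" using tb by (simp add: toLfL_def)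
  have gl: "\<gamma> (card (gT g)) \<le> \<gamma> (2 ^ j)" using gT mono_g by (simp add: monoD)
  have "valid (Lc (toLfL ((j, b) # xs)))" using e IH wg cb dj sd sb tb by auto
  moreover have "gsz (Lc (toLfL ((j, b) # xs))) \<le> sum_list (map (\<lambda>pb. \<gamma> (2 ^ fst pb)) ((j, b) # xs))"
    using e IH gl by (simp add: gsz_Uc gsz_Lf)
  moreover have "card (cdom (Lc ((j, b) # xs))) \<le> tau ((j, b) # xs)"
  proof -
    have "card (cdom (Lc ((j, b) # xs))) \<le> card (cdom b) + card (cdom (Lc xs))" by (simp add: card_Un_le)
    then show ?thesis using ccb IH by (simp add: tau_Cons)
  qed
  moreover have "\<forall>y\<in>cdom (Lc ((j, b) # xs)). col (Lc (toLfL ((j, b) # xs))) y = col (Lc ((j, b) # xs)) y"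
    using e IH colb cb dj tb by auto
  moreover have "\<forall>g'\<in>set (groups (Lc (toLfL ((j, b) # xs)))). \<exists>pb\<in>set ((j, b) # xs). card (gT g') \<le> 2 ^ fst pb"
    using e IH gT by auto
  ultimately show ?case using e IH cb sb tb by auto
qed

end

context sys begin

lemma bl_ok_blocks: "bl_ok low xs \<Longrightarrow> \<forall>pb\<in>set xs. blk_ok (fst pb) 0 (snd pb)"
  by (induction low xs rule: bl_ok.induct) (auto intro: blk_low_mono)

lemma gS_split: "gS m = (\<Sum>i<m. \<gamma> (2 ^ i)) + \<gamma> (2 ^ m)"
  unfolding gS_def by (simp add: lessThan_Suc_atMost[symmetric])

lemma carry_props:
  assumes vx: "valid (Lc xs)" and bo: "bl_ok 0 xs" and si: "sinc xs"
    and wsg: "wd (gT sg) (gG sg) (gc sg)" and sgT: "gT sg = {x}" and sgG: "gG sg = {x}"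
    and xn: "x \<notin> cdom (Lc xs)"
    and sl1: "\<forall>s\<in>slots (Lc xs). s < gs sg" and sl2: "gs sg < sl"
    and FF: "insert x (cdom (Lc xs)) \<subseteq> F"
  shows "valid (Lc (carry sg sl xs)) \<and> cdom (Lc (carry sg sl xs)) = insert x (cdom (Lc xs)) \<and>
    slots (Lc (carry sg sl xs)) \<subseteq> slots (Lc xs) \<union> {gs sg, sl} \<and>
    (\<forall>y\<in>cdom (Lc xs). col (Lc (carry sg sl xs)) y = col (Lc xs) y) \<and>
    bl_ok 0 (migL 2 (carry sg sl xs)) \<and> sinc (carry sg sl xs) \<and> tau (carry sg sl xs) = Suc (tau xs)"
proof -
  obtain p q where sp: "split_pre 0 xs = (p, q)" by (cases "split_pre 0 xs")
  have SP: "xs = p @ q \<and> (\<forall>pb\<in>set p. isc (snd pb) \<and> blk_ok (fst pb) 0 (snd pb)) \<and> map fst p = [0..<0 + length p] \<and>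
    bl_ok (2 ^ (0 + length p) - 1) q \<and> (\<forall>pb\<in>set q. 0 + length p < fst pb) \<and> sinc q \<and>
    tau p + 2 ^ 0 = 2 ^ (0 + length p)"
    by (rule split_pre_props) (use bo si sp in auto)
  have xs: "xs = p @ q" using SP by blast
  have vpq: "valid (Lc p)" "valid (Lc q)" "cdom (Lc p) \<inter> cdom (Lc q) = {}" "slots (Lc p) \<inter> slots (Lc q) = {}"
    using vx xs valid_Lc_append by auto
  have cdx: "cdom (Lc xs) = cdom (Lc p) \<union> cdom (Lc q)" "slots (Lc xs) = slots (Lc p) \<union> slots (Lc q)"
    by (subst xs, simp add: Lc_append)+
  have colx: "col (Lc xs) y = col (Lc p) y" if "y \<in> cdom (Lc p)" for y using xs Lc_col_append(1) that by metis
  have colq: "col (Lc xs) y = col (Lc q) y" if "y \<notin> cdom (Lc p)" for y using xs Lc_col_append(2) that by metis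
  have sgv: "valid (Lf sg)" using wsg by simp
  have blq: "bl_ok (2 ^ length p - 1) q" and gtq: "\<forall>pb\<in>set q. length p < fst pb" and siq: "sinc q"
    and tp: "tau p + 1 = 2 ^ length p" and mp: "map fst p = [0..<length p]" using SP by auto
  show ?thesis
  proof (cases "p = []")
    case True
    then have e: "carry sg sl xs = (0, Lf sg) # xs" and qx: "q = xs" using sp xs unfolding carry_def by auto
    have v: "valid (Lc ((0, Lf sg) # xs))" using vx wsg sgG xn sl1 by auto
    have b0: "blk_ok 0 0 (Lf sg)"
    proof -
      have "gsz (Lf sg) \<le> 2 * gS 0" using sgT by (simp add: gsz_Lf gS_def)
      then show ?thesis using sgv sgT unfolding blk_ok_def allT_def by simp
    qed
    have "bl_ok 0 (migL 2 ((0, Lf sg) # xs))" using b0 bl_mig[OF bo] by (simp add: migL_def)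
    moreover have "sinc ((0, Lf sg) # xs)" using si gtq qx True by simp
    moreover have "\<forall>y\<in>cdom (Lc xs). col (Lc ((0, Lf sg) # xs)) y = col (Lc xs) y" using xn sgG by auto
    ultimately show ?thesis using e v sgG by (auto simp: tau_Cons)
  next
    case False
    define m where "m = length p"
    have m1: "1 \<le> m" using False unfolding m_def by (cases p) auto
    have blp: "\<forall>pb\<in>set p. isc (snd pb) \<and> blk_ok (fst pb) 0 (snd pb)" using SP by blast
    note TL = toLfL_props[OF vpq(1) blp]
    define src where "src = Uc (Lf sg) (Lc (toLfL p))"
    define T where "T = cdom src"
    define tgt where "tgt = Grp T T (c0 T) sl"
    have nb: "newblk sg sl p = Ov src tgt {}" unfolding newblk_def src_def T_def tgt_def Let_def by simp
    have e: "carry sg sl xs = (m, Ov src tgt {}) # q" using sp False nb unfolding carry_def m_def by simp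
    have Tx: "T = insert x (cdom (Lc p))" unfolding T_def src_def using TL sgG by auto
    have vsrc: "valid src" unfolding src_def using sgv TL xn sgG cdx sl1 by auto
    have fT: "finite T" unfolding T_def using valid_finite[OF vsrc] .
    have TF: "T \<subseteq> F" using Tx FF cdx by auto
    have wt: "wd T T (c0 T)" by (rule c0_wd[OF fT TF])
    have slsrc: "slots src \<subseteq> insert (gs sg) (slots (Lc p))" unfolding src_def using TL by auto
    have slt: "\<forall>s\<in>slots src. s < sl"
    proof
      fix s assume "s \<in> slots src"
      then have "s = gs sg \<or> s \<in> slots (Lc xs)" using slsrc cdx by auto
      then show "s < sl" using sl1 sl2 by auto
    qed
    have vnb: "valid (Ov src tgt {})" using vsrc wt slt unfolding tgt_def T_def by auto
    have cT: "card T \<le> 2 ^ m"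
    proof -
      have "card T \<le> Suc (card (cdom (Lc p)))" using Tx by (simp add: card_insert_le_m1)
      also have "\<dots> \<le> Suc (tau p)" using TL by simp
      finally show ?thesis using tp unfolding m_def by simp
    qed
    have hg: "hgt (Ov src tgt {}) \<le> 2" unfolding src_def using TL by simp
    have at: "allT (2 ^ m) (Ov src tgt {})"
    proof -
      have "\<forall>g\<in>set (groups (Lc (toLfL p))). card (gT g) \<le> 2 ^ m"
      proof
        fix g assume "g \<in> set (groups (Lc (toLfL p)))"
        then obtain pb where pb: "pb \<in> set p" "card (gT g) \<le> 2 ^ fst pb" using TL by blast
        have "fst pb \<in> set (map fst p)" using pb by simp
        then have "fst pb < m" using mp unfolding m_def by simp
        then have "(2::nat) ^ fst pb \<le> 2 ^ m" by (simp add: power_increasing)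
        then show "card (gT g) \<le> 2 ^ m" using pb(2) by (rule order.trans[rotated])
      qed
      moreover have "(1::nat) \<le> 2 ^ m" by simp
      ultimately show ?thesis using cT sgT unfolding allT_def src_def tgt_def by auto
    qed
    have gz: "gsz (Ov src tgt {}) \<le> 2 * gS m"
    proof -
      have s1: "sum_list (map (\<lambda>pb. \<gamma> (2 ^ fst pb)) p) = (\<Sum>i<m. \<gamma> (2 ^ i))"
      proof -
        have "sum_list (map (\<lambda>pb. \<gamma> (2 ^ fst pb)) p) = sum_list (map (\<lambda>i. \<gamma> (2 ^ i)) (map fst p))"
          by (simp add: comp_def)
        also have "\<dots> = sum_list (map (\<lambda>i. \<gamma> (2 ^ i)) [0..<m])" using mp unfolding m_def by simp
        also have "\<dots> = (\<Sum>i<m. \<gamma> (2 ^ i))" by (simp add: interv_sum_list_conv_sum_set_nat atLeast0LessThan)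
        finally show ?thesis .
      qed
      have g1: "\<gamma> (card T) \<le> \<gamma> (2 ^ m)" using cT mono_g by (simp add: monoD)
      have g2: "\<gamma> 1 \<le> gS m" using g_le_gS[of 1 0 m] by simp
      have "gsz (Ov src tgt {}) = \<gamma> (card T) + \<gamma> 1 + gsz (Lc (toLfL p))"
        unfolding src_def tgt_def using sgT by (simp add: gsz_Ov gsz_Uc gsz_Lf)
      also have "\<dots> \<le> \<gamma> (2 ^ m) + gS m + (\<Sum>i<m. \<gamma> (2 ^ i))" using g1 g2 TL s1 by simp
      also have "\<dots> = 2 * gS m" using gS_split[of m] by simp
      finally show ?thesis .
    qed
    have bk: "blk_ok m 0 (Ov src tgt {})"
    proof -
      have "unm (Ov src tgt {}) \<le> 2 ^ m" using cT unfolding tgt_def by simp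
      then show ?thesis using vnb hg at gz m1 unfolding blk_ok_def by (simp del: valid.simps)
    qed
    have cO: "cdom (Ov src tgt {}) = insert x (cdom (Lc p))" using Tx unfolding T_def by simp
    have xq: "x \<notin> cdom (Lc q)" using xn cdx by blast
    have dj: "cdom (Ov src tgt {}) \<inter> cdom (Lc q) = {}" unfolding cO using xq vpq(3) by blast
    have sO: "slots (Ov src tgt {}) \<subseteq> {sl, gs sg} \<union> slots (Lc p)" using slsrc unfolding tgt_def by auto
    have sq: "\<forall>s\<in>slots (Lc q). s < gs sg" using sl1 cdx by blast
    have "sl \<notin> slots (Lc q)" "gs sg \<notin> slots (Lc q)" using sq sl2 by fastforce+
    then have sj: "slots (Ov src tgt {}) \<inter> slots (Lc q) = {}" using sO vpq(4) by blast
    have v: "valid (Lc ((m, Ov src tgt {}) # q))" unfolding Lc.simps valid.simps(3) using vnb vpq(2) dj sj by blast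
    have cd: "cdom (Lc ((m, Ov src tgt {}) # q)) = insert x (cdom (Lc xs))" using Tx cdx unfolding T_def by auto
    have sls: "slots (Lc ((m, Ov src tgt {}) # q)) \<subseteq> slots (Lc xs) \<union> {gs sg, sl}" using sO cdx by auto
    have cl: "\<forall>y\<in>cdom (Lc xs). col (Lc ((m, Ov src tgt {}) # q)) y = col (Lc xs) y"
    proof
      fix y assume y: "y \<in> cdom (Lc xs)"
      then have yx: "y \<noteq> x" using xn by auto
      show "col (Lc ((m, Ov src tgt {}) # q)) y = col (Lc xs) y"
      proof (cases "y \<in> cdom (Lc p)")
        case True
        then have "col (Lc ((m, Ov src tgt {}) # q)) y = col (Lc (toLfL p)) y"
          using Tx yx TL sgG unfolding T_def src_def by auto
        also have "\<dots> = col (Lc p) y" using TL True by simp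
        also have "\<dots> = col (Lc xs) y" using colx True by simp
        finally show ?thesis .
      next
        case False
        then have "y \<notin> cdom (Ov src tgt {})" using Tx yx unfolding T_def by auto
        then have "col (Lc ((m, Ov src tgt {}) # q)) y = col (Lc q) y" by simp
        then show ?thesis using colq False by simp
      qed
    qed
    have "blk_ok m 0 (migc 2 (Ov src tgt {}))" using blk_low_mono[OF blk_mig[OF bk]] by simp
    moreover have "bl_ok (2 ^ m) (migL 2 q)" using bl_mig[OF blq] m1 unfolding m_def by simp
    ultimately have bo': "bl_ok 0 (migL 2 ((m, Ov src tgt {}) # q))" by (simp add: migL_def)
    have si': "sinc ((m, Ov src tgt {}) # q)" using gtq siq unfolding m_def by simp
    have ta: "tau ((m, Ov src tgt {}) # q) = Suc (tau xs)" using tp xs unfolding m_def by (simp add: tau_Cons tau_append)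
    show ?thesis unfolding e using v cd sls cl bo' si' ta by blast
  qed
qed

end


datatype 'o st = St (cold: "'o cfg") (bg: "'o grp") (vb: "'o set") (ls: "(nat \<times> 'o cfg) list")
  (n0: nat) (ep: nat) (nx: nat) (mc: nat)

definition topO :: "'o st \<Rightarrow> 'o cfg" where
  "topO s = Ov (cold s) (bg s) (vb s)"

definition topc :: "'o st \<Rightarrow> 'o cfg" where
  "topc s = Uc (topO s) (Lc (ls s))"

definition clog :: "nat \<Rightarrow> nat" where
  "clog m = (LEAST a. m \<le> 2 ^ a)"

lemma clog_ge: "m \<le> 2 ^ clog m"
proof -
  have "m \<le> 2 ^ m" using less_exp[of m] by simp
  then show ?thesis unfolding clog_def by (rule LeastI)
qed

lemma clog_le: "m \<le> 2 ^ a \<Longrightarrow> clog m \<le> a"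
  unfolding clog_def by (rule Least_le)

lemma clog_mono: "m \<le> m' \<Longrightarrow> clog m \<le> clog m'"
  using clog_ge[of m'] by (intro clog_le) simp

lemma clog_8: "clog (8 * n) \<le> clog n + 3"
proof (rule clog_le)
  have "8 * n \<le> 8 * 2 ^ clog n" using clog_ge[of n] by simp
  then show "8 * n \<le> 2 ^ (clog n + 3)" by (simp add: power_add)
qed

lemma clog_min: "0 < clog m \<Longrightarrow> 2 ^ (clog m - 1) < m"
proof (rule ccontr)
  assume a: "0 < clog m" "\<not> 2 ^ (clog m - 1) < m"
  then have "clog m \<le> clog m - 1" by (intro clog_le) simp
  then show False using a by simp
qed

lemma exp_le_imp: "(2::nat) ^ j \<le> 2 ^ c \<Longrightarrow> j \<le> c"
  by simp

lemma clog_real: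
  assumes "1 \<le> n"
  shows "log 2 (real n) \<le> real (clog n)" "real (clog n) < log 2 (real n) + 1"
proof -
  have "real n \<le> 2 powr real (clog n)" using clog_ge[of n]
    by (simp add: powr_realpow)
  then show "log 2 (real n) \<le> real (clog n)" using assms by (simp add: log_le_iff)
  show "real (clog n) < log 2 (real n) + 1"
  proof (cases "clog n = 0")
    case True
    have "0 \<le> log 2 (real n)" using assms by (simp add: zero_le_log_cancel_iff)
    then show ?thesis using True by simp
  next
    case False
    then have "2 ^ (clog n - 1) < n" using clog_min by simp
    then have "real (2 ^ (clog n - 1)) < real n" by linarith
    then have "2 powr real (clog n - 1) < real n" by (simp add: powr_realpow)
    then have "real (clog n - 1) < log 2 (real n)" using assms by (simp add: less_log_iff)
    then show ?thesis using False by simp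
  qed
qed

context sys begin

declare valid.simps(4)[simp del]

lemma valid_OvI: "valid a \<Longrightarrow> wd (gT g) (gG g) (gc g) \<Longrightarrow> gG g = cdom a \<Longrightarrow> V \<subseteq> gG g \<Longrightarrow>
  thr (gc g) (gG g) V \<Longrightarrow> (\<forall>s\<in>slots a. s < gs g) \<Longrightarrow> valid (Ov a g V)"
  unfolding valid.simps(4) thr_def by blast

lemma valid_OvD: "valid (Ov a g V) \<Longrightarrow> valid a \<and> wd (gT g) (gG g) (gc g) \<and> gG g = cdom a \<and> V \<subseteq> gG g \<and>
  thr (gc g) (gG g) V \<and> (\<forall>s\<in>slots a. s < gs g)"
  unfolding valid.simps(4) thr_def by blast

definition inv :: "'o st \<Rightarrow> bool" where
  "inv s \<longleftrightarrow> valid (topc s) \<and> cdom (topc s) \<subseteq> F \<and> (\<forall>x\<in>slots (topc s). x < nx s) \<and>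
     ep s \<le> n0 s div 16 \<and> (unm (topO s) + 16 * ep s \<le> n0 s \<or> unm (topO s) = 0) \<and>
     card (gT (bg s)) \<le> n0 s \<and>
     allT (mc s) (cold s) \<and> mc s \<le> 2 * (n0 s + 1) \<and> hgt (cold s) \<le> 2 \<and>
     gsz (cold s) \<le> (clog (mc s) + 2) * (2 * gS (clog (mc s))) \<and>
     bl_ok 0 (ls s) \<and> sinc (ls s) \<and> tau (ls s) \<le> ep s \<and>
     n0 s \<le> card (cdom (topc s)) + ep s \<and> card (cdom (topc s)) \<le> n0 s + ep s"

(* weaker invariant for intermediate state before epoch transition *)
definition pinv :: "'o st \<Rightarrow> bool" where
  "pinv s \<longleftrightarrow> valid (topc s) \<and> cdom (topc s) \<subseteq> F \<and> (\<forall>x\<in>slots (topc s). x < nx s) \<and>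
     ep s \<le> n0 s div 16 + 1 \<and> (unm (topO s) + 16 * ep s \<le> n0 s \<or> unm (topO s) = 0) \<and>
     card (gT (bg s)) \<le> n0 s \<and>
     allT (mc s) (cold s) \<and> mc s \<le> 2 * (n0 s + 1) \<and> hgt (cold s) \<le> 2 \<and>
     gsz (cold s) \<le> (clog (mc s) + 2) * (2 * gS (clog (mc s))) \<and>
     bl_ok 0 (ls s) \<and> sinc (ls s) \<and> tau (ls s) \<le> ep s \<and>
     n0 s \<le> card (cdom (topc s)) + ep s \<and> card (cdom (topc s)) \<le> n0 s + ep s"

definition trans :: "'o st \<Rightarrow> 'o st" where
  "trans s = (if ep s = n0 s div 16 + 1 then
     (let S = cdom (topc s) in St (Uc (Lf (bg s)) (Lc (ls s))) (Grp S S (c0 S) (nx s)) {} [] (card S) 0 (Suc (nx s)) (Suc (n0 s)))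
     else s)"

lemma Lc_groups_mem: "g \<in> set (groups (Lc xs)) \<Longrightarrow> \<exists>pb\<in>set xs. g \<in> set (groups (snd pb))"
  by (induction xs rule: Lc.induct) auto

lemma Lc_bounds:
  assumes "bl_ok 0 xs" "sinc xs" "tau xs \<le> M"
  shows "length xs \<le> clog M + 1" "\<forall>pb\<in>set xs. fst pb \<le> clog M" "gsz (Lc xs) \<le> length xs * (2 * gS (clog M))"
    "allT M (Lc xs)" "hgt (Lc xs) \<le> 2" "2 ^ length xs \<le> M + 1"
proof -
  have B: "\<forall>pb\<in>set xs. blk_ok (fst pb) 0 (snd pb)" using bl_ok_blocks[OF assms(1)] .
  have lt: "2 ^ length xs - 1 \<le> tau xs" using len_tau[OF assms(2), of 0] by simp
  then show l2: "2 ^ length xs \<le> M + 1" using assms(3) by simp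
  also have "\<dots> \<le> 2 ^ clog M + 1" using clog_ge[of M] by simp
  also have "\<dots> \<le> 2 ^ (clog M + 1)" by simp
  finally have "(2::nat) ^ length xs \<le> 2 ^ (clog M + 1)" .
  then show "length xs \<le> clog M + 1" by (intro power_le_imp_le_exp[of 2]) auto
  show lv: "\<forall>pb\<in>set xs. fst pb \<le> clog M"
  proof
    fix pb assume "pb \<in> set xs"
    then have "2 ^ fst pb \<le> tau xs" using tau_ge[of "fst pb" "snd pb" xs] by simp
    also have "\<dots> \<le> 2 ^ clog M" using assms(3) clog_ge[of M] by simp
    finally show "fst pb \<le> clog M" by simp
  qed
  have "\<forall>pb\<in>set xs. gsz (snd pb) \<le> 2 * gS (clog M)"
  proof
    fix pb assume p: "pb \<in> set xs"
    then have "gsz (snd pb) \<le> 2 * gS (fst pb)" using B unfolding blk_ok_def by blast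
    also have "\<dots> \<le> 2 * gS (clog M)" using gS_mono lv p by simp
    finally show "gsz (snd pb) \<le> 2 * gS (clog M)" .
  qed
  then show "gsz (Lc xs) \<le> length xs * (2 * gS (clog M))" unfolding gsz_Lc
    by (induction xs) auto
  show "allT M (Lc xs)" unfolding allT_def
  proof
    fix g assume "g \<in> set (groups (Lc xs))"
    then obtain pb where p: "pb \<in> set xs" "g \<in> set (groups (snd pb))"
      using Lc_groups_mem by blast
    then have "card (gT g) \<le> 2 ^ fst pb" using B unfolding blk_ok_def allT_def by blast
    also have "\<dots> \<le> tau xs" using tau_ge[of "fst pb" "snd pb" xs] p by simp
    finally show "card (gT g) \<le> M" using assms(3) by simp
  qed
  show "hgt (Lc xs) \<le> 2" using B unfolding blk_ok_def by (intro Lc_hgt) blast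
qed

lemma trans_props:
  assumes "pinv s"
  shows "inv (trans s) \<and> cdom (topc (trans s)) = cdom (topc s) \<and>
    (\<forall>y\<in>cdom (topc s). col (topc (trans s)) y = col (topc s) y)"
proof (cases "ep s = n0 s div 16 + 1")
  case False
  then show ?thesis using assms unfolding trans_def pinv_def inv_def by auto
next
  case True
  define S where "S = cdom (topc s)"
  have P: "valid (topc s)" "cdom (topc s) \<subseteq> F" "\<forall>x\<in>slots (topc s). x < nx s"
     "unm (topO s) + 16 * ep s \<le> n0 s \<or> unm (topO s) = 0"
     "card (gT (bg s)) \<le> n0 s" "bl_ok 0 (ls s)" "sinc (ls s)" "tau (ls s) \<le> ep s"
     "n0 s \<le> card S + ep s" using assms unfolding pinv_def S_def by auto
  have vt: "valid (topO s)" "valid (Lc (ls s))" "cdom (topO s) \<inter> cdom (Lc (ls s)) = {}"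
    "slots (topO s) \<inter> slots (Lc (ls s)) = {}" using P(1) unfolding topc_def by auto
  note OD = valid_OvD[OF vt(1)[unfolded topO_def]]
  have u0: "unm (topO s) = 0" using P(4) True by auto
  have fG: "finite (gG (bg s))" using OD WD_props(3) by blast
  have vbg: "vb s = gG (bg s)"
  proof -
    have "card (gG (bg s) - vb s) = 0" using u0 unfolding topO_def by simp
    then have "gG (bg s) - vb s = {}" using fG by simp
    then show ?thesis using OD by blast
  qed
  define cold' where "cold' = Uc (Lf (bg s)) (Lc (ls s))"
  define bg' where "bg' = Grp S S (c0 S) (nx s)"
  have e: "trans s = St cold' bg' {} [] (card S) 0 (Suc (nx s)) (Suc (n0 s))"
    using True unfolding trans_def cold'_def bg'_def S_def Let_def by simp
  have cdc: "cdom cold' = S" unfolding cold'_def S_def topc_def topO_def using OD by auto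
  have vc: "valid cold'" unfolding cold'_def using OD vt unfolding topO_def by auto
  have fS: "finite S" unfolding S_def using valid_finite[OF P(1)] .
  have wS: "wd S S (c0 S)" using c0_wd[OF fS] P(2) unfolding S_def by simp
  have slc: "slots cold' \<subseteq> slots (topc s)" unfolding cold'_def topc_def topO_def by auto
  have vO: "valid (Ov cold' bg' {})"
    by (rule valid_OvI) (use vc wS cdc slc P(3) in \<open>auto simp: bg'_def thr_def\<close>)
  have vtop: "valid (topc (trans s))" unfolding e topc_def topO_def using vO by simp
  have cdt: "cdom (topc (trans s)) = S" unfolding e topc_def topO_def using cdc by simp
  have colt: "\<forall>y\<in>S. col (topc (trans s)) y = col (topc s) y"
  proof
    fix y assume y: "y \<in> S"
    have "col (topc (trans s)) y = col cold' y" unfolding e topc_def topO_def using y cdc by simp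
    also have "\<dots> = col (topc s) y" unfolding cold'_def topc_def topO_def using vbg OD by auto
    finally show "col (topc (trans s)) y = col (topc s) y" .
  qed
  have "\<forall>x\<in>slots cold'. x < nx s" using slc P(3) by blast
  then have slt: "\<forall>x\<in>slots (topc (trans s)). x < nx (trans s)" unfolding e topc_def topO_def bg'_def
    by (auto intro: less_SucI)
  have LB: "length (ls s) \<le> clog (Suc (n0 s)) + 1" "\<forall>pb\<in>set (ls s). fst pb \<le> clog (Suc (n0 s))"
    "gsz (Lc (ls s)) \<le> length (ls s) * (2 * gS (clog (Suc (n0 s))))"
    "allT (Suc (n0 s)) (Lc (ls s))" "hgt (Lc (ls s)) \<le> 2"
    using Lc_bounds[OF P(6) P(7), of "Suc (n0 s)"] P(8) True by auto
  have at: "allT (Suc (n0 s)) cold'" using LB(4) P(5) unfolding cold'_def allT_def by auto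
  have mc: "Suc (n0 s) \<le> 2 * (card S + 1)"
  proof -
    define q where "q = n0 s div 16"
    have d: "16 * q \<le> n0 s" unfolding q_def by simp
    have e: "n0 s \<le> card S + q + 1" using P(9) True unfolding q_def by simp
    have "n0 s + 1 \<le> 2 * card S + 2"
    proof (cases "q = 0")
      case True then show ?thesis using e by linarith
    next
      case False then show ?thesis using e d by linarith
    qed
    then show ?thesis by simp
  qed
  have hc: "hgt cold' \<le> 2" using LB(5) unfolding cold'_def by simp
  have gc: "gsz cold' \<le> (clog (Suc (n0 s)) + 2) * (2 * gS (clog (Suc (n0 s))))"
  proof -
    have "\<gamma> (card (gT (bg s))) \<le> gS (clog (Suc (n0 s)))"
      using P(5) clog_ge[of "Suc (n0 s)"] by (intro g_le_gS[of _ "clog (Suc (n0 s))"]) auto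
    then have "gsz cold' \<le> gS (clog (Suc (n0 s))) + length (ls s) * (2 * gS (clog (Suc (n0 s))))"
      using LB(3) unfolding cold'_def by (simp add: gsz_Uc gsz_Lf)
    also have "\<dots> \<le> gS (clog (Suc (n0 s))) + (clog (Suc (n0 s)) + 1) * (2 * gS (clog (Suc (n0 s))))"
      using LB(1) by (intro add_left_mono mult_right_mono) auto
    also have "\<dots> \<le> (clog (Suc (n0 s)) + 2) * (2 * gS (clog (Suc (n0 s))))" by (simp add: algebra_simps)
    finally show ?thesis .
  qed
  have tr: "cold (trans s) = cold'" "bg (trans s) = bg'" "vb (trans s) = {}" "ls (trans s) = []"
    "n0 (trans s) = card S" "ep (trans s) = 0" "nx (trans s) = Suc (nx s)" "mc (trans s) = Suc (n0 s)"
    using e by simp_all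
  have SF: "S \<subseteq> F" using P(2) unfolding S_def .
  have "inv (trans s)" unfolding inv_def using vtop cdt SF slt at mc hc gc
    by (simp add: tr topO_def bg'_def tau_def)
  then show ?thesis using cdt colt unfolding S_def by simp
qed

end


fun ova :: "'o cfg \<Rightarrow> 'o cfg" where "ova (Ov a g V) = a" | "ova _ = Em"
fun ovg :: "'o cfg \<Rightarrow> 'o grp" where "ovg (Ov a g V) = g" | "ovg _ = Grp {} {} (\<lambda>_. 0) 0"
fun ovv :: "'o cfg \<Rightarrow> 'o set" where "ovv (Ov a g V) = V" | "ovv _ = {}"
fun isOv :: "'o cfg \<Rightarrow> bool" where "isOv (Ov a g V) = True" | "isOv _ = False"

lemma isOv_eq: "isOv c \<Longrightarrow> c = Ov (ova c) (ovg c) (ovv c)"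
  by (cases c) auto

lemma sinc_migL: "sinc (migL k xs) = sinc xs"
  unfolding migL_def by (induction xs rule: sinc.induct) auto

lemma tau_migL: "tau (migL k xs) = tau xs"
  unfolding migL_def tau_def by (induction xs) auto

lemma len_migL: "length (migL k xs) = length xs"
  unfolding migL_def by simp

context sys begin

lemma isOv_del: "isOv (del x (Ov a g V))"
  by (simp add: Let_def)

lemma isOv_migc: "isOv c \<Longrightarrow> isOv (migc k c)"
  by (cases c) auto

lemma ova_migc: "ova (migc k (Ov a g V)) = a" "ovg (migc k (Ov a g V)) = g" by simp_all

definition delL :: "'o \<Rightarrow> (nat \<times> 'o cfg) list \<Rightarrow> (nat \<times> 'o cfg) list" where
  "delL x xs = map (\<lambda>(j, b). (j, del x b)) xs"

lemma del_Lc: "del x (Lc xs) = Lc (delL x xs)"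
  unfolding delL_def by (induction xs rule: Lc.induct) auto

lemma sinc_delL: "sinc (delL x xs) = sinc xs"
  unfolding delL_def by (induction xs rule: sinc.induct) auto

lemma tau_delL: "tau (delL x xs) = tau xs"
  unfolding delL_def tau_def by (induction xs) auto

lemma allT_mono: "allT M c \<Longrightarrow> M \<le> M' \<Longrightarrow> allT M' c"
  unfolding allT_def by auto

lemma allT_gT: "map gT (groups c) = map gT (groups c') \<Longrightarrow> allT M c' \<Longrightarrow> allT M c"
proof -
  assume e: "map gT (groups c) = map gT (groups c')" and a: "allT M c'"
  have "set (map gT (groups c)) = set (map gT (groups c'))" using e by simp
  then have "gT ` set (groups c) = gT ` set (groups c')" by simp
  then show ?thesis using a unfolding allT_def by (metis image_eqI imageE)
qed

lemma gsz_gT: "map gT (groups c) = map gT (groups c') \<Longrightarrow> gsz c = gsz c'"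
proof -
  assume e: "map gT (groups c) = map gT (groups c')"
  have "gsz c = sum_list (map (\<lambda>t. \<gamma> (card t)) (map gT (groups c)))"
    unfolding gsz_def by (simp add: comp_def)
  also have "\<dots> = sum_list (map (\<lambda>t. \<gamma> (card t)) (map gT (groups c')))" by (simp only: e)
  also have "\<dots> = gsz c'" unfolding gsz_def by (simp add: comp_def)
  finally show ?thesis .
qed

lemma del_groups: "valid c \<Longrightarrow> allT M (del x c) = allT M c \<and> gsz (del x c) = gsz c \<and> hgt (del x c) = hgt c"
proof -
  assume v: "valid c"
  have "map gT (groups (del x c)) = map gT (groups c)" "hgt (del x c) = hgt c" using del_valid[OF v] by auto
  moreover have "allT M c' = (\<forall>t\<in>set (map gT (groups c')). card t \<le> M)" for c' :: "'o cfg"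
    unfolding allT_def by auto
  moreover have "gsz c' = sum_list (map (\<lambda>t. \<gamma> (card t)) (map gT (groups c')))" for c' :: "'o cfg"
    unfolding gsz_def by (simp add: comp_def)
  ultimately show ?thesis by metis
qed

lemma isc_del: assumes v: "valid b" and i: "isc b" shows "isc (del x b)"
proof (cases b)
  case (Lf g)
  then show ?thesis by simp
next
  case (Ov a g V)
  have u: "unm b = 0" using i Ov by simp
  have "unm (del x b) = 0" using del_unm_le[OF v, of x] u by simp
  moreover have vd: "valid (del x b)" using del_valid[OF v] by simp
  moreover have "isOv (del x b)" using Ov isOv_del by simp
  ultimately show ?thesis
    by (cases "del x b") (auto dest!: valid_OvD WD_props(3) simp: card_eq_0_iff)
qed (use i in auto)

lemma blk_del: "blk_ok j low b \<Longrightarrow> blk_ok j low (del x b)"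
proof -
  assume a: "blk_ok j low b"
  then have v: "valid b" and sh: "shp b" unfolding blk_ok_def by auto
  note D = del_valid[OF v, of x] del_groups[OF v, of "2 ^ j" x]
  have "shp (del x b)" using sh by (cases b) (auto simp: Let_def)
  moreover have "unm (del x b) \<le> unm b" using del_unm_le[OF v] .
  moreover have "isc b \<Longrightarrow> isc (del x b)" using isc_del[OF v] .
  ultimately show ?thesis using a D unfolding blk_ok_def by auto
qed

lemma bl_del: "bl_ok low xs \<Longrightarrow> bl_ok low (delL x xs)"
  unfolding delL_def by (induction low xs rule: bl_ok.induct) (auto intro: blk_del)

definition del_st :: "'o st \<Rightarrow> 'o \<Rightarrow> 'o st" where
  "del_st s x = (let O1 = migc 16 (del x (topO s)) in
     trans (St (ova O1) (ovg O1) (ovv O1) (delL x (ls s)) (n0 s) (Suc (ep s)) (nx s) (mc s)))"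

lemma allT_top: "inv s \<Longrightarrow> allT (2 * (n0 s + 1)) (topc s)"
proof -
  assume I: "inv s"
  then have a1: "allT (mc s) (cold s)" "mc s \<le> 2 * (n0 s + 1)" "card (gT (bg s)) \<le> n0 s"
    "bl_ok 0 (ls s)" "sinc (ls s)" "tau (ls s) \<le> ep s" "ep s \<le> n0 s div 16" unfolding inv_def by auto
  have "allT (ep s) (Lc (ls s))" using Lc_bounds(4)[OF a1(4,5,6)] .
  moreover have "ep s \<le> n0 s" using le_trans[OF a1(7) div_le_dividend] .
  then have "ep s \<le> 2 * (n0 s + 1)" by simp
  ultimately have "allT (2 * (n0 s + 1)) (Lc (ls s))" by (rule allT_mono)
  moreover have "allT (2 * (n0 s + 1)) (cold s)" using a1(1,2) by (rule allT_mono)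
  ultimately show ?thesis using a1(3) unfolding allT_def topc_def topO_def by auto
qed

lemma hgt_top: "inv s \<Longrightarrow> hgt (topc s) \<le> 3"
proof -
  assume I: "inv s"
  then have "hgt (cold s) \<le> 2" "bl_ok 0 (ls s)" "sinc (ls s)" "tau (ls s) \<le> ep s" unfolding inv_def by auto
  then show ?thesis using Lc_bounds(5)[of "ls s" "ep s"] unfolding topc_def topO_def by simp
qed

lemma del_st_props:
  assumes I: "inv s" and x: "x \<in> cdom (topc s)"
  shows "inv (del_st s x) \<and> cdom (topc (del_st s x)) = cdom (topc s) - {x} \<and>
    card {y \<in> cdom (topc s) - {x}. col (topc (del_st s x)) y \<noteq> col (topc s) y} \<le> 6 * r (2 * (n0 s + 1)) + 64"
proof -
  define S where "S = cdom (topc s)"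
  have P: "valid (topc s)" "cdom (topc s) \<subseteq> F" "\<forall>x\<in>slots (topc s). x < nx s"
     "ep s \<le> n0 s div 16" "unm (topO s) + 16 * ep s \<le> n0 s \<or> unm (topO s) = 0"
     "card (gT (bg s)) \<le> n0 s" "allT (mc s) (cold s)" "mc s \<le> 2 * (n0 s + 1)" "hgt (cold s) \<le> 2"
     "gsz (cold s) \<le> (clog (mc s) + 2) * (2 * gS (clog (mc s)))"
     "bl_ok 0 (ls s)" "sinc (ls s)" "tau (ls s) \<le> ep s"
     "n0 s \<le> card S + ep s" "card S \<le> n0 s + ep s" using I unfolding inv_def S_def by auto
  have vt: "valid (topO s)" "valid (Lc (ls s))" "cdom (topO s) \<inter> cdom (Lc (ls s)) = {}"
    "slots (topO s) \<inter> slots (Lc (ls s)) = {}" using P(1) unfolding topc_def by auto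
  define D where "D = del x (topO s)"
  define O1 where "O1 = migc 16 D"
  have DV: "valid D" "cdom D = cdom (topO s) - {x}" "slots D = slots (topO s)" "map gT (groups D) = map gT (groups (topO s))"
    using del_valid[OF vt(1), of x] unfolding D_def by auto
  note MV = migc_props[OF DV(1), of 16, folded O1_def]
  have iO: "isOv O1" unfolding O1_def D_def topO_def by (intro isOv_migc isOv_del)
  have Oe: "Ov (ova O1) (ovg O1) (ovv O1) = O1" using isOv_eq[OF iO] by simp
  define s1 where "s1 = St (ova O1) (ovg O1) (ovv O1) (delL x (ls s)) (n0 s) (Suc (ep s)) (nx s) (mc s)"
  have ds: "del_st s x = trans s1" unfolding del_st_def s1_def O1_def D_def Let_def by simp
  have tO1: "topO s1 = O1" unfolding s1_def topO_def using Oe by simp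
  have tc1: "topc s1 = Uc O1 (Lc (delL x (ls s)))" unfolding topc_def using tO1 by (simp add: s1_def)
  note LV = del_valid[OF vt(2), of x, unfolded del_Lc]
  have vs1: "valid (topc s1)" unfolding tc1 using MV DV LV vt by auto
  have cdtop: "cdom (topc s) = cdom (topO s) \<union> cdom (Lc (ls s))" by (simp add: topc_def)
  have sltop: "slots (topc s) = slots (topO s) \<union> slots (Lc (ls s))" by (simp add: topc_def)
  have cd1: "cdom (topc s1) = S - {x}" unfolding tc1 S_def cdtop using MV DV LV by auto
  have sl1: "slots (topc s1) = slots (topc s)" unfolding tc1 sltop using MV DV LV by simp
  have Dform: "D = Ov (ova D) (ovg D) (ovv D)" using isOv_eq[OF isOv_del] unfolding D_def topO_def by metis
  have uD: "unm D \<le> (if x \<in> gG (bg s) then unm (topO s) - 16 else unm (topO s))"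
    unfolding D_def topO_def using del_unm[OF vt(1)[unfolded topO_def], of x] .
  have uO1: "unm O1 = unm D - 16" using MV(6) .
  have uO1': "unm O1 \<le> unm (topO s) - 16" using uD uO1 by (auto split: if_splits)
  have prog: "unm (topO s1) + 16 * ep s1 \<le> n0 s1 \<or> unm (topO s1) = 0"
  proof (cases "unm (topO s) \<ge> 16")
    case True
    then show ?thesis using P(5) uO1' tO1 unfolding s1_def by auto
  next
    case False
    then show ?thesis using uO1' tO1 by simp
  qed
  have gO1: "map gT (groups O1) = map gT (groups (topO s))" using MV(4) DV(4) by simp
  have "map gT (groups (Ov (ova O1) (ovg O1) (ovv O1))) = map gT (groups (Ov (cold s) (bg s) (vb s)))"
    using gO1 Oe unfolding topO_def by simp
  then have gt: "gT (ovg O1) = gT (bg s)" and gcold: "map gT (groups (ova O1)) = map gT (groups (cold s))"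
    by simp_all
  have "hgt O1 = hgt (topO s)" using MV(5) del_valid[OF vt(1), of x] unfolding D_def by simp
  then have "hgt (Ov (ova O1) (ovg O1) (ovv O1)) = hgt (Ov (cold s) (bg s) (vb s))" using Oe unfolding topO_def by simp
  then have hc: "hgt (ova O1) = hgt (cold s)" by simp
  have atc: "allT (mc s) (ova O1)" using P(7) gcold allT_gT by blast
  have gzc: "gsz (ova O1) = gsz (cold s)" using gcold gsz_gT by blast
  have bl1: "bl_ok 0 (delL x (ls s))" using bl_del[OF P(11)] .
  have cS: "card (S - {x}) = card S - 1" using x unfolding S_def by simp
  have fS: "finite S" unfolding S_def using valid_finite[OF P(1)] .
  have cS1: "1 \<le> card S" using x fS unfolding S_def by (metis One_nat_def Suc_leI card_gt_0_iff empty_iff)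
  have tr: "cold s1 = ova O1" "bg s1 = ovg O1" "vb s1 = ovv O1" "ls s1 = delL x (ls s)" "n0 s1 = n0 s"
    "ep s1 = Suc (ep s)" "nx s1 = nx s" "mc s1 = mc s" by (simp_all add: s1_def)
  have q1: "cdom (topc s1) \<subseteq> F" using cd1 P(2) unfolding S_def by auto
  have q2: "\<forall>x\<in>slots (topc s1). x < nx s1" using sl1 P(3) tr by simp
  have q3: "ep s1 \<le> n0 s1 div 16 + 1" using P(4) tr by simp
  have q4: "card (gT (bg s1)) \<le> n0 s1" using gt P(6) tr by simp
  have q5: "allT (mc s1) (cold s1)" "mc s1 \<le> 2 * (n0 s1 + 1)" "hgt (cold s1) \<le> 2"
    "gsz (cold s1) \<le> (clog (mc s1) + 2) * (2 * gS (clog (mc s1)))" using atc P(8) hc P(9) gzc P(10) tr by simp_all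
  have q6: "bl_ok 0 (ls s1)" "sinc (ls s1)" "tau (ls s1) \<le> ep s1" using bl1 P(12,13) tr
    by (simp_all add: sinc_delL tau_delL)
  have q7: "n0 s1 \<le> card (cdom (topc s1)) + ep s1" "card (cdom (topc s1)) \<le> n0 s1 + ep s1"
    using cd1 cS cS1 P(14,15) tr by simp_all
  have pi: "pinv s1" unfolding pinv_def using vs1 q1 q2 q3 prog q4 q5 q6 q7 by blast
  note T = trans_props[OF pi]
  have c1: "card {y \<in> S - {x}. col (del x (topc s)) y \<noteq> col (topc s) y} \<le> dcost x (topc s)"
    using del_cost[OF P(1), of x] unfolding S_def .
  have c2: "dcost x (topc s) \<le> mult x (topc s) * (2 * r (2 * (n0 s + 1)) + 16)"
    using dcost_bound[OF P(1) allT_top[OF I]] .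
  have c3: "mult x (topc s) \<le> 3" using le_trans[OF mult_hgt[OF P(1), of x] hgt_top[OF I]] .
  have dtop: "del x (topc s) = Uc D (Lc (delL x (ls s)))" unfolding topc_def D_def by (simp add: del_Lc)
  have sub: "{y \<in> S - {x}. col (topc s1) y \<noteq> col (topc s) y} \<subseteq>
      {y \<in> S - {x}. col (del x (topc s)) y \<noteq> col (topc s) y} \<union> {y \<in> cdom D. col O1 y \<noteq> col D y}"
    unfolding tc1 dtop using MV(2) by auto
  have fin: "finite ({y \<in> S - {x}. col (del x (topc s)) y \<noteq> col (topc s) y} \<union> {y \<in> cdom D. col O1 y \<noteq> col D y})"
    using fS valid_finite[OF DV(1)] by auto
  have "card {y \<in> S - {x}. col (topc s1) y \<noteq> col (topc s) y} \<le>
      card {y \<in> S - {x}. col (del x (topc s)) y \<noteq> col (topc s) y} + card {y \<in> cdom D. col O1 y \<noteq> col D y}"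
    using card_mono[OF fin sub] card_Un_le le_trans by blast
  also have "\<dots> \<le> 3 * (2 * r (2 * (n0 s + 1)) + 16) + 16" using c1 c2 c3 MV(7)
    by (meson add_le_mono le_trans mult_le_mono1)
  finally have cost: "card {y \<in> S - {x}. col (topc s1) y \<noteq> col (topc s) y} \<le> 6 * r (2 * (n0 s + 1)) + 64" by simp
  have "{y \<in> S - {x}. col (topc (trans s1)) y \<noteq> col (topc s) y} = {y \<in> S - {x}. col (topc s1) y \<noteq> col (topc s) y}"
    using T cd1 by auto
  then show ?thesis using T cd1 cost ds unfolding S_def by simp
qed

end

context sys begin

definition ins_st :: "'o st \<Rightarrow> 'o \<Rightarrow> 'o st" where
  "ins_st s x = (let sg = Grp {x} {x} (c0 {x}) (nx s); ys = carry sg (Suc (nx s)) (ls s); O1 = migc 16 (topO s) in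
     trans (St (cold s) (bg s) (ovv O1) (migL 2 ys) (n0 s) (Suc (ep s)) (nx s + 2) (mc s)))"

lemma ins_st_props:
  assumes I: "inv s" and xF: "x \<in> F" and xn: "x \<notin> cdom (topc s)"
  shows "inv (ins_st s x) \<and> cdom (topc (ins_st s x)) = insert x (cdom (topc s)) \<and>
    (\<exists>L. 2 ^ L \<le> ep s + 2 \<and> card {y \<in> cdom (topc s). col (topc (ins_st s x)) y \<noteq> col (topc s) y} \<le> 2 * L + 16)"
proof -
  define S where "S = cdom (topc s)"
  have P: "valid (topc s)" "cdom (topc s) \<subseteq> F" "\<forall>x\<in>slots (topc s). x < nx s"
     "ep s \<le> n0 s div 16" "unm (topO s) + 16 * ep s \<le> n0 s \<or> unm (topO s) = 0"
     "card (gT (bg s)) \<le> n0 s" "allT (mc s) (cold s)" "mc s \<le> 2 * (n0 s + 1)" "hgt (cold s) \<le> 2"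
     "gsz (cold s) \<le> (clog (mc s) + 2) * (2 * gS (clog (mc s)))"
     "bl_ok 0 (ls s)" "sinc (ls s)" "tau (ls s) \<le> ep s"
     "n0 s \<le> card S + ep s" "card S \<le> n0 s + ep s" using I unfolding inv_def S_def by auto
  have vt: "valid (topO s)" "valid (Lc (ls s))" "cdom (topO s) \<inter> cdom (Lc (ls s)) = {}"
    "slots (topO s) \<inter> slots (Lc (ls s)) = {}" using P(1) unfolding topc_def by auto
  have cdtop: "cdom (topc s) = cdom (topO s) \<union> cdom (Lc (ls s))" by (simp add: topc_def)
  have sltop: "slots (topc s) = slots (topO s) \<union> slots (Lc (ls s))" by (simp add: topc_def)
  define sg where "sg = Grp {x} {x} (c0 {x}) (nx s)"
  define ys where "ys = carry sg (Suc (nx s)) (ls s)"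
  define O1 where "O1 = migc 16 (topO s)"
  have wsg: "wd (gT sg) (gG sg) (gc sg)" unfolding sg_def using c0_wd[of "{x}"] xF by simp
  have C: "valid (Lc ys) \<and> cdom (Lc ys) = insert x (cdom (Lc (ls s))) \<and>
    slots (Lc ys) \<subseteq> slots (Lc (ls s)) \<union> {gs sg, Suc (nx s)} \<and>
    (\<forall>y\<in>cdom (Lc (ls s)). col (Lc ys) y = col (Lc (ls s)) y) \<and>
    bl_ok 0 (migL 2 ys) \<and> sinc ys \<and> tau ys = Suc (tau (ls s))"
    unfolding ys_def
    by (rule carry_props[OF vt(2) P(11) P(12) wsg]) (use xn P(2,3) xF cdtop sltop in \<open>auto simp: sg_def\<close>)
  note MLp = migL_props[OF conjunct1[OF C], of 2]
  note MO = migc_props[OF vt(1), of 16, folded O1_def]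
  have iO: "isOv O1" unfolding O1_def topO_def by (intro isOv_migc) simp
  have Oe: "O1 = Ov (cold s) (bg s) (ovv O1)" unfolding O1_def topO_def by simp
  define s1 where "s1 = St (cold s) (bg s) (ovv O1) (migL 2 ys) (n0 s) (Suc (ep s)) (nx s + 2) (mc s)"
  have isd: "ins_st s x = trans s1" unfolding ins_st_def s1_def O1_def ys_def sg_def Let_def by simp
  have tr: "cold s1 = cold s" "bg s1 = bg s" "vb s1 = ovv O1" "ls s1 = migL 2 ys" "n0 s1 = n0 s"
    "ep s1 = Suc (ep s)" "nx s1 = nx s + 2" "mc s1 = mc s" by (simp_all add: s1_def)
  have tO1: "topO s1 = O1" unfolding topO_def using tr Oe by simp
  have tc1: "topc s1 = Uc O1 (Lc (migL 2 ys))" unfolding topc_def using tO1 tr by simp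
  have xO: "x \<notin> cdom (topO s)" using xn cdtop by simp
  have slO: "\<forall>s'\<in>slots (topO s). s' < nx s" using P(3) sltop by simp
  have sgs: "gs sg = nx s" unfolding sg_def by simp
  have dj1: "cdom O1 \<inter> cdom (Lc (migL 2 ys)) = {}" using MO(2) MLp(2) C vt(3) xO by auto
  have dj2: "slots O1 \<inter> slots (Lc (migL 2 ys)) = {}"
  proof -
    have "slots (Lc (migL 2 ys)) \<subseteq> slots (Lc (ls s)) \<union> {nx s, Suc (nx s)}" using MLp(3) C sgs by simp
    moreover have "nx s \<notin> slots (topO s)" "Suc (nx s) \<notin> slots (topO s)" using slO by auto
    ultimately show ?thesis using MO(3) vt(4) by blast
  qed
  have vs1: "valid (topc s1)" unfolding tc1 using MO(1) MLp(1) dj1 dj2 by simp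
  have cd1: "cdom (topc s1) = insert x S" unfolding tc1 S_def cdtop using MO(2) MLp(2) C by auto
  have q1: "cdom (topc s1) \<subseteq> F" using cd1 P(2) xF unfolding S_def by auto
  have q2: "\<forall>y\<in>slots (topc s1). y < nx s1"
  proof
    fix y assume "y \<in> slots (topc s1)"
    then have "y \<in> slots (topO s) \<or> y \<in> slots (Lc (ls s)) \<or> y = nx s \<or> y = Suc (nx s)"
      unfolding tc1 using MO(3) MLp(3) C sgs by auto
    moreover have h: "\<forall>z\<in>slots (topO s) \<union> slots (Lc (ls s)). z < nx s" using P(3) sltop by simp
    ultimately have "y < nx s \<or> y = nx s \<or> y = Suc (nx s)" by blast
    then have "y < nx s + 2" by linarith
    then show "y < nx s1" using tr by simp
  qed
  have q3: "ep s1 \<le> n0 s1 div 16 + 1" using P(4) tr by simp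
  have prog: "unm (topO s1) + 16 * ep s1 \<le> n0 s1 \<or> unm (topO s1) = 0"
  proof (cases "unm (topO s) \<ge> 16")
    case True
    then show ?thesis using P(5) MO(6) tO1 tr by auto
  next
    case False
    then show ?thesis using MO(6) tO1 by simp
  qed
  have q4: "card (gT (bg s1)) \<le> n0 s1" "allT (mc s1) (cold s1)" "mc s1 \<le> 2 * (n0 s1 + 1)" "hgt (cold s1) \<le> 2"
    "gsz (cold s1) \<le> (clog (mc s1) + 2) * (2 * gS (clog (mc s1)))" using P(6-10) tr by simp_all
  have q6: "bl_ok 0 (ls s1)" "sinc (ls s1)" "tau (ls s1) \<le> ep s1" using C P(13) tr
    by (simp_all add: sinc_migL tau_migL)
  have fS: "finite S" unfolding S_def using valid_finite[OF P(1)] .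
  have cS: "card (insert x S) = Suc (card S)" using fS xn unfolding S_def by simp
  have q7: "n0 s1 \<le> card (cdom (topc s1)) + ep s1" "card (cdom (topc s1)) \<le> n0 s1 + ep s1"
    using cd1 cS P(14,15) tr by simp_all
  have pi: "pinv s1" unfolding pinv_def using vs1 q1 q2 q3 prog q4 q6 q7 by blast
  note T = trans_props[OF pi]
  define L where "L = length ys"
  have Lb: "2 ^ L \<le> ep s + 2"
  proof -
    have "2 ^ L - 1 \<le> tau ys" using len_tau[of ys 0] C unfolding L_def by simp
    then show ?thesis using C P(13) by simp
  qed
  have tcs: "topc s = Uc (topO s) (Lc (ls s))" by (simp add: topc_def)
  have sub: "{y \<in> S. col (topc s1) y \<noteq> col (topc s) y} \<subseteq>
      {y \<in> cdom (topO s). col O1 y \<noteq> col (topO s) y} \<union> {y \<in> cdom (Lc ys). col (Lc (migL 2 ys)) y \<noteq> col (Lc ys) y}"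
  proof
    fix y assume y: "y \<in> {y \<in> S. col (topc s1) y \<noteq> col (topc s) y}"
    show "y \<in> {y \<in> cdom (topO s). col O1 y \<noteq> col (topO s) y} \<union> {y \<in> cdom (Lc ys). col (Lc (migL 2 ys)) y \<noteq> col (Lc ys) y}"
    proof (cases "y \<in> cdom (topO s)")
      case True
      then show ?thesis using y MO(2) unfolding tc1 tcs by auto
    next
      case False
      then have yL: "y \<in> cdom (Lc (ls s))" using y unfolding S_def cdtop by auto
      then have "col (Lc ys) y = col (Lc (ls s)) y" using C by blast
      then show ?thesis using y False yL MO(2) C unfolding tc1 tcs by auto
    qed
  qed
  have fin: "finite ({y \<in> cdom (topO s). col O1 y \<noteq> col (topO s) y} \<union> {y \<in> cdom (Lc ys). col (Lc (migL 2 ys)) y \<noteq> col (Lc ys) y})"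
    using valid_finite[OF vt(1)] valid_finite[OF conjunct1[OF C]] by auto
  have "card {y \<in> S. col (topc s1) y \<noteq> col (topc s) y} \<le>
      card {y \<in> cdom (topO s). col O1 y \<noteq> col (topO s) y} + card {y \<in> cdom (Lc ys). col (Lc (migL 2 ys)) y \<noteq> col (Lc ys) y}"
    using card_mono[OF fin sub] card_Un_le le_trans by blast
  also have "\<dots> \<le> 16 + 2 * L" using MO(7) MLp(6) unfolding L_def by (intro add_mono) auto
  finally have cost: "card {y \<in> S. col (topc s1) y \<noteq> col (topc s) y} \<le> 2 * L + 16" by simp
  have "{y \<in> S. col (topc (trans s1)) y \<noteq> col (topc s) y} = {y \<in> S. col (topc s1) y \<noteq> col (topc s) y}"
    using T cd1 by auto
  then show ?thesis using T cd1 cost isd Lb unfolding S_def by auto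
qed

end


definition enc :: "nat \<times> int \<Rightarrow> nat" where
  "enc p = prod_encode (fst p, int_encode (snd p))"

lemma inj_enc: "inj enc"
proof (rule injI)
  fix a b assume "enc a = enc b"
  then have "(fst a, int_encode (snd a)) = (fst b, int_encode (snd b))"
    unfolding enc_def using inj_prod_encode[of UNIV] by (auto dest: injD)
  then show "a = b" by (simp add: int_encode_eq prod_eq_iff)
qed

context sys begin

definition s0 :: "'o st" where
  "s0 = St Em (Grp {} {} (c0 {}) 0) {} [] 0 0 1 0"

lemma inv_s0: "inv s0 \<and> cdom (topc s0) = {}"
proof -
  have w: "wd {} {} (c0 {})" using c0_wd[of "{}"] by simp
  have v: "valid (Ov Em (Grp {} {} (c0 {}) 0) {})" by (rule valid_OvI) (use w in \<open>auto simp: thr_def\<close>)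
  show ?thesis unfolding inv_def s0_def topc_def topO_def using v
    by (simp add: allT_def gsz_Em tau_def)
qed

lemma inv_facts:
  assumes "inv s"
  shows "15 * n0 s \<le> 16 * card (cdom (topc s))" "16 * ep s \<le> n0 s"
proof -
  have a: "ep s \<le> n0 s div 16" "n0 s \<le> card (cdom (topc s)) + ep s" using assms unfolding inv_def by auto
  show "16 * ep s \<le> n0 s" using a(1) by (metis dual_order.trans div_times_less_eq_dividend mult.commute mult_le_mono2)
  then show "15 * n0 s \<le> 16 * card (cdom (topc s))" using a(2) by linarith
qed

lemma colors_nat:
  assumes I: "inv s" and n2: "2 \<le> card (cdom (topc s))"
  shows "card (col (topc s) ` cdom (topc s)) \<le> (4 * (clog (card (cdom (topc s))) + 3) + 7) * gS (clog (card (cdom (topc s))) + 3)"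
proof -
  define n where "n = card (cdom (topc s))"
  define K where "K = clog n + 3"
  have P: "valid (topc s)" "card (gT (bg s)) \<le> n0 s" "mc s \<le> 2 * (n0 s + 1)"
     "gsz (cold s) \<le> (clog (mc s) + 2) * (2 * gS (clog (mc s)))"
     "bl_ok 0 (ls s)" "sinc (ls s)" "tau (ls s) \<le> ep s" using I unfolding inv_def by auto
  note F = inv_facts[OF I, folded n_def]
  have n0n: "n0 s \<le> 2 * n" using F by linarith
  have epn: "ep s \<le> n" using F by linarith
  have cn: "n \<le> 2 ^ clog n" by (rule clog_ge)
  have g1: "\<gamma> (card (gT (bg s))) \<le> gS K"
  proof (rule g_le_gS[of _ K K])
    have "card (gT (bg s)) \<le> 2 * 2 ^ clog n" using P(2) n0n cn by linarith
    also have "\<dots> \<le> 2 ^ K" unfolding K_def by (simp add: power_add)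
    finally show "card (gT (bg s)) \<le> 2 ^ K" .
  qed simp
  have mcK: "clog (mc s) \<le> K"
  proof -
    have "2 \<le> n" using n2 unfolding n_def .
    moreover have "mc s \<le> 2 * (2 * n + 1)" using P(3) n0n by simp
    ultimately have "mc s \<le> 8 * n" by simp
    then have "clog (mc s) \<le> clog (8 * n)" by (rule clog_mono)
    then show ?thesis using clog_8[of n] unfolding K_def by linarith
  qed
  have g2: "gsz (cold s) \<le> (K + 2) * (2 * gS K)"
  proof -
    have "gsz (cold s) \<le> (clog (mc s) + 2) * (2 * gS (clog (mc s)))" by (rule P(4))
    also have "\<dots> \<le> (K + 2) * (2 * gS K)" using mcK gS_mono[OF mcK] by (intro mult_mono) auto
    finally show ?thesis .
  qed
  note LB = Lc_bounds[OF P(5) P(6) P(7)]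
  have ceK: "clog (ep s) \<le> K" using clog_mono[OF epn] unfolding K_def by simp
  have g3: "gsz (Lc (ls s)) \<le> (K + 1) * (2 * gS K)"
  proof -
    have "gsz (Lc (ls s)) \<le> length (ls s) * (2 * gS (clog (ep s)))" by (rule LB(3))
    also have "\<dots> \<le> (K + 1) * (2 * gS K)" using LB(1) ceK gS_mono[OF ceK] by (intro mult_mono) auto
    finally show ?thesis .
  qed
  have "card (col (topc s) ` cdom (topc s)) \<le> gsz (topc s)" by (rule card_col[OF P(1)])
  also have "gsz (topc s) = \<gamma> (card (gT (bg s))) + gsz (cold s) + gsz (Lc (ls s))"
    unfolding topc_def topO_def by (simp add: gsz_Uc gsz_Ov)
  also have "\<dots> \<le> gS K + (K + 2) * (2 * gS K) + (K + 1) * (2 * gS K)" using g1 g2 g3 by linarith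
  also have "\<dots> = (4 * K + 7) * gS K" by (simp add: algebra_simps)
  finally show ?thesis unfolding K_def n_def .
qed

lemma colors_real:
  assumes I: "inv s"
  shows "real (card (col (topc s) ` cdom (topc s))) \<le>
    100 * real (gS (clog (card (cdom (topc s))) + 3)) * log 2 (real (card (cdom (topc s)))) + 100"
proof -
  define n where "n = card (cdom (topc s))"
  have fin: "finite (cdom (topc s))" using I valid_finite unfolding inv_def by blast
  have lg0: "0 \<le> log 2 (real n)"
  proof (cases "n = 0")
    case True then show ?thesis by (simp add: log_def)
  next
    case False then show ?thesis by (simp add: zero_le_log_cancel_iff)
  qed
  have rhs: "100 \<le> 100 * real (gS (clog n + 3)) * log 2 (real n) + 100" using lg0 by simp
  show ?thesis
  proof (cases "n \<le> 1")
    case True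
    have "card (col (topc s) ` cdom (topc s)) \<le> n" unfolding n_def using fin by (rule card_image_le)
    then have "real (card (col (topc s) ` cdom (topc s))) \<le> 100" using True by simp
    then show ?thesis using rhs unfolding n_def by linarith
  next
    case False
    then have n2: "2 \<le> n" by simp
    note CN = colors_nat[OF I n2[unfolded n_def], folded n_def]
    have lg1: "1 \<le> log 2 (real n)" using n2 by (simp add: le_log_iff)
    have cl: "real (clog n) < log 2 (real n) + 1" using clog_real(2)[of n] n2 by simp
    have G: "0 \<le> real (gS (clog n + 3))" by simp
    have "real (card (col (topc s) ` cdom (topc s))) \<le> real ((4 * (clog n + 3) + 7) * gS (clog n + 3))"
      using CN by linarith
    also have "\<dots> = (4 * real (clog n) + 19) * real (gS (clog n + 3))" by simp
    also have "\<dots> \<le> (27 * log 2 (real n)) * real (gS (clog n + 3))"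
      using cl lg1 G by (intro mult_right_mono) auto
    also have "\<dots> \<le> 100 * real (gS (clog n + 3)) * log 2 (real n) + 100"
      using lg0 G by (simp add: mult_right_mono algebra_simps)
    finally show ?thesis unfolding n_def .
  qed
qed

end


lemma recol_enc: "recolorings T (enc \<circ> f) (enc \<circ> g) = card {y \<in> T. g y \<noteq> f y}"
  unfolding recolorings_def using inj_enc by (simp add: inj_eq)

lemma ins_real:
  fixes L n :: nat
  assumes "2 ^ L \<le> n + 2"
  shows "real (2 * L + 16) \<le> 100 * log 2 (real n) + 100"
proof (cases "n = 0")
  case True
  then have "2 ^ L \<le> (2::nat) ^ 1" using assms by simp
  then have "L \<le> 1" by (intro power_le_imp_le_exp[of 2]) auto
  then show ?thesis using True by (simp add: log_def)
next
  case False
  then have n1: "1 \<le> n" by simp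
  have "2 ^ L \<le> 4 * n" using assms n1 by linarith
  then have "real (2 ^ L) \<le> real (4 * n)" by linarith
  then have "2 powr real L \<le> real (4 * n)" by (simp add: powr_realpow)
  then have "real L \<le> log 2 (real (4 * n))" using n1 by (simp add: le_log_iff)
  also have "log 2 (real (4 * n)) = log 2 4 + log 2 (real n)" using n1 by (simp add: log_mult)
  also have "log 2 (4::real) = 2"
  proof -
    have "log 2 (4::real) = log 2 (2 ^ 2)" by simp
    also have "\<dots> = real 2 * log 2 2" by (rule log_nat_power) simp
    finally show ?thesis by simp
  qed
  finally have "real L \<le> 2 + log 2 (real n)" .
  moreover have "0 \<le> log 2 (real n)" using n1 by (simp add: zero_le_log_cancel_iff)
  ultimately show ?thesis by simp
qed

theorem mainTheorem11:
  fixes rel :: "'q \<Rightarrow> 'o \<Rightarrow> bool" and F :: "'o set"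
    and \<gamma> r :: "nat \<Rightarrow> nat"
  assumes "mono \<gamma>" and "mono r"
    and "\<And>S0. finite S0 \<Longrightarrow> S0 \<subseteq> F \<Longrightarrow>
           \<exists>c0. allows_weak_deletions rel \<gamma> r S0 c0"
  shows "\<exists>(k :: nat \<Rightarrow> nat) (C :: real) Inv.
           (\<lambda>n. real (k n)) \<in> \<Theta>(\<lambda>n. ln (real n)) \<and>
           dynamic_cf_scheme rel F
             (\<lambda>n. C * (\<Sum>i\<le>k n. real (\<gamma> (2 ^ i))) * log 2 (real n) + C)
             (\<lambda>n. C * log 2 (real n) + C)
             (\<lambda>n. C * (real (r (8 * n)) + 1))
             Inv"
proof -
  interpret L: sys rel F \<gamma> r by (unfold_locales) (use assms in auto)
  define k where "k n = clog n + 3" for n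
  define C :: real where "C = 100"
  define Inv where "Inv = {(cdom (topc s), enc \<circ> col (topc s)) | s. L.inv s}"
  have theta: "(\<lambda>n. real (k n)) \<in> \<Theta>(\<lambda>n. ln (real n))"
  proof (rule bigthetaI'[of 1 "5 / ln 2"])
    show "(1::real) > 0" by simp
    show "5 / ln 2 > (0::real)" by simp
    show "eventually (\<lambda>n. 1 * norm (ln (real n)) \<le> norm (real (k n)) \<and> norm (real (k n)) \<le> 5 / ln 2 * norm (ln (real n))) at_top"
    proof (rule eventually_at_top_linorderI[of 2])
      fix n :: nat assume n: "2 \<le> n"
      have ln2: "0 < ln (2::real)" "ln (2::real) < 1" using ln_2_less_1 by simp_all
      have lnn: "ln 2 \<le> ln (real n)" using n by simp
      have lnpos: "0 < ln (real n)" using n by simp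
      have l2: "log 2 (real n) = ln (real n) / ln 2" by (simp add: log_def)
      have c1: "log 2 (real n) \<le> real (clog n)" "real (clog n) < log 2 (real n) + 1" using clog_real[of n] n by auto
      have a: "ln (real n) \<le> log 2 (real n)"
      proof -
        have "ln (real n) * ln 2 \<le> ln (real n)" using ln2 lnpos by (simp add: mult_left_le)
        then show ?thesis unfolding l2 using ln2 by (simp add: le_divide_eq)
      qed
      have q1: "1 \<le> ln (real n) / ln 2" using lnn ln2 by simp
      have b: "real (k n) \<le> 5 / ln 2 * ln (real n)"
      proof -
        have "real (k n) < log 2 (real n) + 4" using c1 unfolding k_def by simp
        also have "\<dots> = ln (real n) / ln 2 + 4" using l2 by simp
        also have "\<dots> \<le> ln (real n) / ln 2 + 4 * (ln (real n) / ln 2)" using q1 by linarith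
        also have "\<dots> = 5 / ln 2 * ln (real n)" by simp
        finally show ?thesis by simp
      qed
      have "ln (real n) \<le> real (k n)" using a c1 unfolding k_def by simp
      then show "1 * norm (ln (real n)) \<le> norm (real (k n)) \<and> norm (real (k n)) \<le> 5 / ln 2 * norm (ln (real n))"
        using b lnpos by simp
    qed
  qed
  have sums: "(\<Sum>i\<le>k n. real (\<gamma> (2 ^ i))) = real (L.gS (k n))" for n
    unfolding L.gS_def by simp
  have scheme: "dynamic_cf_scheme rel F
             (\<lambda>n. C * (\<Sum>i\<le>k n. real (\<gamma> (2 ^ i))) * log 2 (real n) + C)
             (\<lambda>n. C * log 2 (real n) + C)
             (\<lambda>n. C * (real (r (8 * n)) + 1))
             Inv"
    unfolding dynamic_cf_scheme_def
  proof (intro conjI ballI)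
    show "\<exists>c0. ({}, c0) \<in> Inv" using L.inv_s0 unfolding Inv_def by (metis (mono_tags, lifting) mem_Collect_eq)
  next
    fix Sc assume "Sc \<in> Inv"
    then obtain s where I: "L.inv s" and Sc: "Sc = (cdom (topc s), enc \<circ> col (topc s))" unfolding Inv_def by blast
    define S where "S = cdom (topc s)"
    define c where "c = enc \<circ> col (topc s)"
    have vs: "L.valid (topc s)" using I unfolding L.inv_def by simp
    have fS: "finite S" unfolding S_def using L.valid_finite[OF vs] .
    have SF: "S \<subseteq> F" using I unfolding L.inv_def S_def by simp
    have cf: "conflict_free rel S c" unfolding S_def c_def using umx_cf[OF L.valid_umx[OF vs] inj_enc] .
    have colb: "real (card (c ` S)) \<le> C * (\<Sum>i\<le>k (card S). real (\<gamma> (2 ^ i))) * log 2 (real (card S)) + C"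
    proof -
      have "card (c ` S) \<le> card (col (topc s) ` S)" unfolding c_def image_comp[symmetric]
        using fS by (intro card_image_le) simp
      then have "real (card (c ` S)) \<le> real (card (col (topc s) ` S))" by simp
      also have "\<dots> \<le> 100 * real (L.gS (clog (card S) + 3)) * log 2 (real (card S)) + 100"
        using L.colors_real[OF I] unfolding S_def .
      finally show ?thesis unfolding C_def sums unfolding k_def .
    qed
    have insb: "\<forall>x\<in>F - S. \<exists>c'. (insert x S, c') \<in> Inv \<and> real (recolorings S c c') \<le> C * log 2 (real (card S)) + C"
    proof
      fix x assume x: "x \<in> F - S"
      note IP = L.ins_st_props[OF I, of x]
      have ip: "L.inv (L.ins_st s x) \<and> cdom (topc (L.ins_st s x)) = insert x S \<and>
        (\<exists>L. 2 ^ L \<le> ep s + 2 \<and> card {y \<in> S. col (topc (L.ins_st s x)) y \<noteq> col (topc s) y} \<le> 2 * L + 16)"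
        using IP x unfolding S_def by blast
      then obtain Ln where Ln: "2 ^ Ln \<le> ep s + 2" "card {y \<in> S. col (topc (L.ins_st s x)) y \<noteq> col (topc s) y} \<le> 2 * Ln + 16"
        by blast
      have epS: "ep s \<le> card S" using L.inv_facts[OF I] unfolding S_def by linarith
      have "real (card {y \<in> S. col (topc (L.ins_st s x)) y \<noteq> col (topc s) y}) \<le> real (2 * Ln + 16)"
        using Ln(2) by linarith
      also have "\<dots> \<le> 100 * log 2 (real (card S)) + 100" using Ln(1) epS by (intro ins_real) linarith
      finally have "real (recolorings S c (enc \<circ> col (topc (L.ins_st s x)))) \<le> C * log 2 (real (card S)) + C"
        unfolding c_def recol_enc C_def .
      moreover have "(insert x S, enc \<circ> col (topc (L.ins_st s x))) \<in> Inv" unfolding Inv_def using ip by force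
      ultimately show "\<exists>c'. (insert x S, c') \<in> Inv \<and> real (recolorings S c c') \<le> C * log 2 (real (card S)) + C" by blast
    qed
    have delb: "\<forall>x\<in>S. \<exists>c'. (S - {x}, c') \<in> Inv \<and> real (recolorings (S - {x}) c c') \<le> C * (real (r (8 * card S)) + 1)"
    proof
      fix x assume x: "x \<in> S"
      have dp: "L.inv (L.del_st s x) \<and> cdom (topc (L.del_st s x)) = S - {x} \<and>
        card {y \<in> S - {x}. col (topc (L.del_st s x)) y \<noteq> col (topc s) y} \<le> 6 * r (2 * (n0 s + 1)) + 64"
        using L.del_st_props[OF I, of x] x unfolding S_def by blast
      have n1: "1 \<le> card S" using x fS by (metis One_nat_def Suc_leI card_gt_0_iff empty_iff)
      have "15 * n0 s \<le> 16 * card S" using L.inv_facts[OF I] unfolding S_def by simp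
      then have "2 * n0 s + 2 \<le> 8 * card S" using n1 by linarith
      then have "2 * (n0 s + 1) \<le> 8 * card S" by simp
      then have rr: "r (2 * (n0 s + 1)) \<le> r (8 * card S)" using assms(2) by (simp add: monoD)
      have "real (card {y \<in> S - {x}. col (topc (L.del_st s x)) y \<noteq> col (topc s) y}) \<le> real (6 * r (8 * card S) + 64)"
        using dp rr by linarith
      also have "\<dots> \<le> 100 * (real (r (8 * card S)) + 1)" by simp
      finally have "real (recolorings (S - {x}) c (enc \<circ> col (topc (L.del_st s x)))) \<le> C * (real (r (8 * card S)) + 1)"
        unfolding c_def recol_enc C_def .
      moreover have "(S - {x}, enc \<circ> col (topc (L.del_st s x))) \<in> Inv" unfolding Inv_def using dp by force
      ultimately show "\<exists>c'. (S - {x}, c') \<in> Inv \<and> real (recolorings (S - {x}) c c') \<le> C * (real (r (8 * card S)) + 1)" by blast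
    qed
    show "case Sc of (S, c) \<Rightarrow>
        finite S \<and> S \<subseteq> F \<and> conflict_free rel S c \<and>
        real (card (c ` S)) \<le> C * (\<Sum>i\<le>k (card S). real (\<gamma> (2 ^ i))) * log 2 (real (card S)) + C \<and>
        (\<forall>x\<in>F - S. \<exists>c'. (insert x S, c') \<in> Inv \<and> real (recolorings S c c') \<le> C * log 2 (real (card S)) + C) \<and>
        (\<forall>x\<in>S. \<exists>c'. (S - {x}, c') \<in> Inv \<and> real (recolorings (S - {x}) c c') \<le> C * (real (r (8 * card S)) + 1))"
      unfolding Sc S_def[symmetric] c_def[symmetric] using fS SF cf colb insb delb by simp
  qed
  show ?thesis using theta scheme by blast
qed


end
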